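(* Let $K\ge2$. For every bandit problem $\underline\nu=(\nu_k)_{k\in[K]}$ in $\mathcal{D}_{-,+}$ and every suboptimal arm $a$ (i.e., $\Delta_a>0$), one has $\mathcal{K}_{\inf}(\nu_a,\mu^\star,\mathcal{D}_{-,+})=0$; consequently, every strategy that is uniformly fast convergent on $\mathcal{D}_{-,+}$ satisfies, for every bandit problem $\underline\nu$ in $\mathcal{D}_{-,+}$ with at least one suboptimal arm, \[ \liminf_{T\to\infty}\frac{R_T(\underline\nu)}{\ln T}=+\infty . \] The same holds with $\mathcal{D}_{-,+}$ replaced by $\mathcal{D}_{m,+}$ for any $m\in\mathbb{R}$ (both in the vanishing of $\mathcal{K}_{\inf}$ and in the conclusion for strategies uniformly fast convergent on $\mathcal{D}_{m,+}$).
   Context: Stochastic $K$-armed bandit: arm $a$ has distribution $\nu_a$ with mean $\mu_a$, $\mu^\star=\max_a\mu_a$, $\Delta_a=\mu^\star-\mu_a$; at each round the player picks $A_t$ based on past observations and auxiliary independent uniform randomization and receives a reward drawn from $\nu_{A_t}$; $R_T(\underline\nu)=T\mu^\star-\mathbb{E}[\sum_{t\le T}\mu_{A_t}]$. For $m<M$, $\mathcal{D}_{m,M}$ is the set of probability distributions supported on $[m,M]$; $\mathcal{D}_{-,+}=\bigcup_{m<M}\mathcal{D}_{m,M}$ and, for $m\in\mathbb{R}$, $\mathcal{D}_{m,+}=\bigcup_{M>m}\mathcal{D}_{m,M}$. A strategy is uniformly fast convergent on a model $\mathcal{D}$ if for every bandit problem $\underline\nu$ in $\mathcal{D}$ and every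 $\beta\in(0,1]$, $R_T(\underline\nu)/T^{\beta}\to0$. For a distribution $\nu$, $x\in\mathbb{R}$ and a model $\mathcal{D}$, $\mathcal{K}_{\inf}(\nu,x,\mathcal{D})=\inf\{\mathrm{KL}(\nu,\nu'):\nu'\in\mathcal{D},\ \mathbb{E}(\nu')>x\}$ (infimum of the empty set is $+\infty$), where $\mathrm{KL}$ is the Kullback–Leibler divergence and $\mathbb{E}(\nu')$ the mean of $\nu'$. *)

theory Defs
  imports "HOL-Probability.Probability"
begin

definition D_mM :: "real \<Rightarrow> real \<Rightarrow> real measure set" where
  "D_mM m M = {\<nu>. prob_space \<nu> \<and> sets \<nu> = sets borel \<and> emeasure \<nu> {m..M} = 1}"

text \<open>D_{-,+} = union over m < M of D_{m,M}.\<close>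
definition D_all :: "real measure set" where
  "D_all = {\<nu>. \<exists>m M. m < M \<and> \<nu> \<in> D_mM m M}"

definition D_mplus :: "real \<Rightarrow> real measure set" where
  "D_mplus m = {\<nu>. \<exists>M. m < M \<and> \<nu> \<in> D_mM m M}"

definition mean :: "real measure \<Rightarrow> real" where
  "mean \<nu> = (\<integral>x. x \<partial>\<nu>)"

text \<open>KL(P,Q) = integral of f ln f dQ with f = dP/dQ if P << Q, and +infinity otherwise.
  The integral is split into positive and negative parts (the negative part is always finite).\<close>
definition KL :: "real measure \<Rightarrow> real measure \<Rightarrow> ereal" where
  "KL P Q =
     (if absolutely_continuous Q P then
        (let f = (\<lambda>x. enn2real (RN_deriv Q P x));
             \<phi> = (\<lambda>x. f x * ln (f x))
         in enn2ereal (\<integral>\<^sup>+ x. ennreal (\<phi> x) \<partial>Q) - enn2ereal (\<integral>\<^sup>+ x. ennreal (- \<phi> x) \<partial>Q))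
      else \<infinity>)"

text \<open>K_inf(nu, x, D) = inf { KL(nu, nu') : nu' in D, E(nu') > x }; the infimum of the empty set is +infinity.\<close>
definition Kinf :: "real measure \<Rightarrow> real \<Rightarrow> real measure set \<Rightarrow> ereal" where
  "Kinf \<nu> x D = (INF \<nu>'\<in>{\<nu>'\<in>D. mean \<nu>' > x}. KL \<nu> \<nu>')"

text \<open>Arms are 0,...,K-1. A bandit problem in model D assigns a distribution in D to each arm.\<close>
definition bandit_in :: "real measure set \<Rightarrow> nat \<Rightarrow> (nat \<Rightarrow> real measure) \<Rightarrow> bool" where
  "bandit_in D K \<nu> \<longleftrightarrow> (\<forall>a<K. \<nu> a \<in> D)"

definition mu_star :: "nat \<Rightarrow> (nat \<Rightarrow> real measure) \<Rightarrow> real" where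
  "mu_star K \<nu> = Max ((\<lambda>a. mean (\<nu> a)) ` {..<K})"

text \<open>A strategy: at round t (t = 0,1,...) the arm is a measurable function of the
  auxiliary uniform variables U_0..U_t and of the past observed rewards Y_0..Y_{t-1}.\<close>
type_synonym strategy = "nat \<Rightarrow> (nat \<Rightarrow> real) \<Rightarrow> (nat \<Rightarrow> real) \<Rightarrow> nat"

definition is_strategy :: "nat \<Rightarrow> strategy \<Rightarrow> bool" where
  "is_strategy K \<pi> \<longleftrightarrow>
     (\<forall>t. (\<lambda>(u, y). \<pi> t u y) \<in>
        measurable (PiM {..t} (\<lambda>_. borel :: real measure) \<Otimes>\<^sub>M PiM {..<t} (\<lambda>_. borel :: real measure))
                   (count_space {..<K}))"

text \<open>Underlying probability space: for each round t an independent uniform variable U_t on [0,1]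
  and an independent table of rewards (X_{t,a})_{a<K}, X_{t,a} ~ nu_a. The observed reward at round t
  is X_{t,A_t}.\<close>
definition bandit_space :: "nat \<Rightarrow> (nat \<Rightarrow> real measure) \<Rightarrow> (nat \<Rightarrow> real \<times> (nat \<Rightarrow> real)) measure" where
  "bandit_space K \<nu> =
     PiM UNIV (\<lambda>t::nat. uniform_measure lborel {0..1::real} \<Otimes>\<^sub>M PiM {..<K} (\<lambda>a. \<nu> a))"

text \<open>Observed rewards strictly before round t (as a function extensional on {..<t}).\<close>
primrec obs_hist :: "strategy \<Rightarrow> (nat \<Rightarrow> real \<times> (nat \<Rightarrow> real)) \<Rightarrow> nat \<Rightarrow> (nat \<Rightarrow> real)" where
  "obs_hist \<pi> \<omega> 0 = (\<lambda>_. undefined)"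
| "obs_hist \<pi> \<omega> (Suc t) =
     (obs_hist \<pi> \<omega> t)(t := snd (\<omega> t) (\<pi> t (restrict (\<lambda>s. fst (\<omega> s)) {..t}) (obs_hist \<pi> \<omega> t)))"

definition arm :: "strategy \<Rightarrow> (nat \<Rightarrow> real \<times> (nat \<Rightarrow> real)) \<Rightarrow> nat \<Rightarrow> nat" where
  "arm \<pi> \<omega> t = \<pi> t (restrict (\<lambda>s. fst (\<omega> s)) {..t}) (obs_hist \<pi> \<omega> t)"

definition regret :: "nat \<Rightarrow> (nat \<Rightarrow> real measure) \<Rightarrow> strategy \<Rightarrow> nat \<Rightarrow> real" where
  "regret K \<nu> \<pi> T =
     real T * mu_star K \<nu> - (\<integral>\<omega>. (\<Sum>t<T. mean (\<nu> (arm \<pi> \<omega> t))) \<partial>bandit_space K \<nu>)"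

definition uniformly_fast_convergent :: "real measure set \<Rightarrow> nat \<Rightarrow> strategy \<Rightarrow> bool" where
  "uniformly_fast_convergent D K \<pi> \<longleftrightarrow>
     (\<forall>\<nu>. bandit_in D K \<nu> \<longrightarrow>
        (\<forall>\<beta>::real. 0 < \<beta> \<and> \<beta> \<le> 1 \<longrightarrow> (\<lambda>T. regret K \<nu> \<pi> T / real T powr \<beta>) \<longlonglongrightarrow> 0))"

end

theory Submission
  imports Defs "HOL-Real_Asymp.Real_Asymp"
begin

definition mix :: "real measure \<Rightarrow> real \<Rightarrow> real \<Rightarrow> real measure" where
  "mix \<nu> \<epsilon> x = measure_pmf (bernoulli_pmf \<epsilon>) \<bind> (\<lambda>b. if b then return borel x else \<nu>)"

lemma mix_kernel:
  assumes "prob_space \<nu>" "sets \<nu> = sets borel"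
  shows "(\<lambda>b. if b then return borel x else \<nu>) \<in> measurable (measure_pmf (bernoulli_pmf \<epsilon>)) (subprob_algebra borel)"
proof -
  have "(\<lambda>b. if b then return borel x else \<nu>) \<in> measurable (count_space UNIV) (subprob_algebra borel)"
  proof (rule measurable_count_space_eq1[THEN iffD2], rule Pi_I)
    fix b :: bool
    have "return borel x \<in> space (subprob_algebra borel)"
      unfolding space_subprob_algebra
      by (simp add: prob_space_imp_subprob_space prob_space_return)
    moreover have "\<nu> \<in> space (subprob_algebra borel)"
      unfolding space_subprob_algebra using assms by (simp add: prob_space_imp_subprob_space)
    ultimately show "(if b then return borel x else \<nu>) \<in> space (subprob_algebra borel)" by simp
  qed
  moreover have "measurable (measure_pmf (bernoulli_pmf \<epsilon>)) (subprob_algebra borel) = measurable (count_space UNIV) (subprob_algebra borel)"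
    by (rule measurable_cong_sets) auto
  ultimately show ?thesis by simp
qed

lemma sets_mix:
  assumes "prob_space \<nu>" "sets \<nu> = sets borel"
  shows "sets (mix \<nu> \<epsilon> x) = sets borel"
  unfolding mix_def
  by (rule sets_bind_measurable[OF mix_kernel[OF assms]]) simp

lemma nn_integral_mix:
  assumes "prob_space \<nu>" "sets \<nu> = sets borel" "0 \<le> \<epsilon>" "\<epsilon> \<le> 1"
    and f: "f \<in> borel_measurable borel"
  shows "(\<integral>\<^sup>+y. f y \<partial>mix \<nu> \<epsilon> x) = ennreal \<epsilon> * f x + ennreal (1 - \<epsilon>) * (\<integral>\<^sup>+y. f y \<partial>\<nu>)"
proof -
  have "(\<integral>\<^sup>+y. f y \<partial>mix \<nu> \<epsilon> x) = (\<integral>\<^sup>+b. (\<integral>\<^sup>+y. f y \<partial>(if b then return borel x else \<nu>)) \<partial>measure_pmf (bernoulli_pmf \<epsilon>))"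
    unfolding mix_def by (rule nn_integral_bind[OF f mix_kernel[OF assms(1,2)]])
  also have "\<dots> = ennreal \<epsilon> * f x + ennreal (1 - \<epsilon>) * (\<integral>\<^sup>+y. f y \<partial>\<nu>)"
    using assms f
    by (simp add: nn_integral_measure_pmf nn_integral_count_space_finite UNIV_bool nn_integral_return ac_simps)
  finally show ?thesis .
qed

lemma prob_space_mix:
  assumes "prob_space \<nu>" "sets \<nu> = sets borel" "0 \<le> \<epsilon>" "\<epsilon> \<le> 1"
  shows "prob_space (mix \<nu> \<epsilon> x)"
proof (rule prob_spaceI)
  have sp: "space (mix \<nu> \<epsilon> x) = UNIV"
    using sets_eq_imp_space_eq[OF sets_mix[OF assms(1,2)]] by simp
  have "emeasure (mix \<nu> \<epsilon> x) (space (mix \<nu> \<epsilon> x)) = (\<integral>\<^sup>+y. 1 \<partial>mix \<nu> \<epsilon> x)"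
    by simp
  also have "\<dots> = ennreal \<epsilon> * 1 + ennreal (1 - \<epsilon>) * (\<integral>\<^sup>+y. 1 \<partial>\<nu>)"
    by (rule nn_integral_mix[OF assms]) simp
  also have "\<dots> = 1" using assms prob_space.emeasure_space_1[OF assms(1)]
    by (simp add: ennreal_plus[symmetric] del: ennreal_plus)
  finally show "emeasure (mix \<nu> \<epsilon> x) (space (mix \<nu> \<epsilon> x)) = 1" .
qed


lemma D_mM_facts:
  assumes "\<nu> \<in> D_mM m M"
  shows "prob_space \<nu>" "sets \<nu> = sets borel" "AE y in \<nu>. y \<in> {m..M}"
proof -
  show P: "prob_space \<nu>" and S: "sets \<nu> = sets borel" using assms by (auto simp: D_mM_def)
  interpret prob_space \<nu> by fact
  have "emeasure \<nu> {m..M} = 1" using assms by (auto simp: D_mM_def)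
  then have "prob {m..M} = 1" by (simp add: emeasure_eq_measure)
  then show "AE y in \<nu>. y \<in> {m..M}" by (rule AE_prob_1)
qed

lemma mix_D:
  assumes "\<nu> \<in> D_mM m M" "m \<le> M" "0 \<le> \<epsilon>" "\<epsilon> \<le> 1" "M \<le> x"
  shows "mix \<nu> \<epsilon> x \<in> D_mM m x"
proof -
  note F = D_mM_facts[OF assms(1)]
  have "emeasure (mix \<nu> \<epsilon> x) {m..x} = (\<integral>\<^sup>+y. indicator {m..x} y \<partial>mix \<nu> \<epsilon> x)"
    using sets_mix[OF F(1,2)] by (simp add: nn_integral_indicator)
  also have "\<dots> = ennreal \<epsilon> * indicator {m..x} x + ennreal (1 - \<epsilon>) * (\<integral>\<^sup>+y. indicator {m..x} y \<partial>\<nu>)"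
    by (rule nn_integral_mix[OF F(1,2) assms(3,4)]) simp
  also have "(\<integral>\<^sup>+y. indicator {m..x} y \<partial>\<nu>) = (\<integral>\<^sup>+y. 1 \<partial>\<nu>)"
    using F(3) by (rule nn_integral_cong_AE[OF eventually_mono]) (use assms(5) in \<open>simp split: split_indicator\<close>)
  also have "\<dots> = 1" using prob_space.emeasure_space_1[OF F(1)] by simp
  also have "indicator {m..x} x = (1::ennreal)" using assms by simp
  also have "ennreal \<epsilon> * 1 + ennreal (1 - \<epsilon>) * 1 = ennreal (\<epsilon> + (1 - \<epsilon>))"
    using assms by (subst ennreal_plus) auto
  finally have "emeasure (mix \<nu> \<epsilon> x) {m..x} = 1" by simp
  then show ?thesis unfolding D_mM_def
    by (intro CollectI conjI prob_space_mix[OF F(1,2) assms(3,4)] sets_mix[OF F(1,2)])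
qed

lemma mean_mix:
  assumes "\<nu> \<in> D_mM m M" "m \<le> M" "0 \<le> \<epsilon>" "\<epsilon> \<le> 1" "M \<le> x"
  shows "mean (mix \<nu> \<epsilon> x) \<ge> m + \<epsilon> * (x - m)"
proof -
  note F = D_mM_facts[OF assms(1)]
  note G = D_mM_facts[OF mix_D[OF assms]]
  interpret G: prob_space "mix \<nu> \<epsilon> x" by (rule G(1))
  have mble: "(\<lambda>y::real. y) \<in> borel_measurable (mix \<nu> \<epsilon> x)"
    unfolding measurable_cong_sets[OF G(2) refl] by simp
  have int: "integrable (mix \<nu> \<epsilon> x) (\<lambda>y. y)"
    by (rule G.integrable_const_bound[where B="max \<bar>m\<bar> \<bar>x\<bar>", OF eventually_mono[OF G(3)] mble]) auto
  have int2: "integrable (mix \<nu> \<epsilon> x) (\<lambda>y. y - m)" using int by simp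
  have nn: "AE y in mix \<nu> \<epsilon> x. 0 \<le> y - m" using G(3) by auto
  have "ennreal (\<integral>y. y - m \<partial>mix \<nu> \<epsilon> x) = (\<integral>\<^sup>+y. ennreal (y - m) \<partial>mix \<nu> \<epsilon> x)"
    by (rule nn_integral_eq_integral[OF int2 nn, symmetric])
  also have "\<dots> = ennreal \<epsilon> * ennreal (x - m) + ennreal (1 - \<epsilon>) * (\<integral>\<^sup>+y. ennreal (y - m) \<partial>\<nu>)"
    by (rule nn_integral_mix[OF F(1,2) assms(3,4)]) simp
  also have "\<dots> \<ge> ennreal (\<epsilon> * (x - m))"
    using assms by (simp add: ennreal_mult)
  finally have le: "ennreal (\<epsilon> * (x - m)) \<le> ennreal (\<integral>y. y - m \<partial>mix \<nu> \<epsilon> x)" .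
  have i0: "0 \<le> (\<integral>y. y - m \<partial>mix \<nu> \<epsilon> x)" by (rule integral_nonneg_AE[OF nn])
  have "\<epsilon> * (x - m) \<le> (\<integral>y. y - m \<partial>mix \<nu> \<epsilon> x)" using le ennreal_le_iff[OF i0] by blast
  also have "(\<integral>y. y - m \<partial>mix \<nu> \<epsilon> x) = (\<integral>y. y \<partial>mix \<nu> \<epsilon> x) - (\<integral>y. m \<partial>mix \<nu> \<epsilon> x)"
    by (rule Bochner_Integration.integral_diff[OF int]) simp
  also have "(\<integral>y. m \<partial>mix \<nu> \<epsilon> x) = m" using G.prob_space by simp
  also have "(\<integral>y. y \<partial>mix \<nu> \<epsilon> x) = mean (mix \<nu> \<epsilon> x)" by (simp add: mean_def)
  finally show ?thesis by simp
qed

lemma KL_nonneg: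
  assumes P: "prob_space P" and Q: "prob_space Q" and S: "sets P = sets Q"
  shows "KL P Q \<ge> 0"
proof (cases "absolutely_continuous Q P")
  case False then show ?thesis by (simp add: KL_def)
next
  case ac: True
  interpret Q: prob_space Q by fact
  interpret P: prob_space P by fact
  define f where "f = (\<lambda>x. enn2real (RN_deriv Q P x))"
  define \<phi> where "\<phi> = (\<lambda>x. f x * ln (f x))"
  have fm: "f \<in> borel_measurable Q" unfolding f_def by measurable
  have \<phi>m: "\<phi> \<in> borel_measurable Q" unfolding \<phi>_def using fm by measurable
  have dens: "density Q (RN_deriv Q P) = P" by (rule Q.density_RN_deriv[OF ac S])
  have fin: "AE x in Q. RN_deriv Q P x \<noteq> \<infinity>"
    by (rule Q.RN_deriv_finite[OF _ ac S]) (simp add: P.sigma_finite_measure)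
  have "(\<integral>\<^sup>+x. ennreal (f x) \<partial>Q) = (\<integral>\<^sup>+x. RN_deriv Q P x \<partial>Q)"
    by (rule nn_integral_cong_AE) (use fin in \<open>auto simp: f_def less_top\<close>)
  also have "\<dots> = (\<integral>\<^sup>+x. 1 \<partial>density Q (RN_deriv Q P))"
    by (subst nn_integral_density) auto
  also have "\<dots> = 1" unfolding dens using P.emeasure_space_1 by simp
  finally have int1: "(\<integral>\<^sup>+x. ennreal (f x) \<partial>Q) = 1" .
  have pw: "ennreal (f x) + ennreal (- \<phi> x) \<le> ennreal (\<phi> x) + 1" for x
  proof -
    have f0: "f x \<ge> 0" by (simp add: f_def)
    have key: "f x * ln (f x) \<ge> f x - 1"
    proof (cases "f x = 0")
      case False
      then have "f x > 0" using f0 by simp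
      have "ln (1 / f x) \<le> 1 / f x - 1" using \<open>f x > 0\<close> by (intro ln_le_minus_one) simp
      then have "- ln (f x) \<le> 1 / f x - 1" using \<open>f x > 0\<close> by (simp add: ln_div)
      then have "f x * (- ln (f x)) \<le> f x * (1 / f x - 1)" using f0 by (rule mult_left_mono)
      moreover have "f x * (1 / f x - 1) = 1 - f x" using \<open>f x > 0\<close> by (simp add: field_simps)
      ultimately show ?thesis by simp
    qed simp
    show ?thesis
    proof (cases "\<phi> x \<ge> 0")
      case True
      then have "ennreal (- \<phi> x) = 0" by (simp add: ennreal_neg)
      moreover have "ennreal (f x) \<le> ennreal (\<phi> x + 1)" using key by (intro ennreal_leI) (simp add: \<phi>_def)
      moreover have "ennreal (\<phi> x) + 1 = ennreal (\<phi> x + 1)" using True by simp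
      ultimately show ?thesis by simp
    next
      case False
      then show ?thesis using key f0
        by (simp add: \<phi>_def ennreal_plus[symmetric] ennreal_neg del: ennreal_plus)
    qed
  qed
  have "1 + (\<integral>\<^sup>+x. ennreal (- \<phi> x) \<partial>Q) = (\<integral>\<^sup>+x. ennreal (f x) + ennreal (- \<phi> x) \<partial>Q)"
    using fm \<phi>m by (subst nn_integral_add) (auto simp: int1)
  also have "\<dots> \<le> (\<integral>\<^sup>+x. ennreal (\<phi> x) + 1 \<partial>Q)"
    by (rule nn_integral_mono) (rule pw)
  also have "\<dots> = (\<integral>\<^sup>+x. ennreal (\<phi> x) \<partial>Q) + 1"
    using \<phi>m by (subst nn_integral_add) (auto simp: Q.emeasure_space_1)
  finally have "1 + (\<integral>\<^sup>+x. ennreal (- \<phi> x) \<partial>Q) \<le> 1 + (\<integral>\<^sup>+x. ennreal (\<phi> x) \<partial>Q)"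
    by (metis add.commute)
  then have le: "(\<integral>\<^sup>+x. ennreal (- \<phi> x) \<partial>Q) \<le> (\<integral>\<^sup>+x. ennreal (\<phi> x) \<partial>Q)"
    unfolding ennreal_add_left_cancel_le by simp
  have le2: "enn2ereal (\<integral>\<^sup>+x. ennreal (- \<phi> x) \<partial>Q) \<le> enn2ereal (\<integral>\<^sup>+x. ennreal (\<phi> x) \<partial>Q)"
    using le by (metis less_eq_ennreal.rep_eq)
  have nn: "0 \<le> enn2ereal (\<integral>\<^sup>+x. ennreal (\<phi> x) \<partial>Q) - enn2ereal (\<integral>\<^sup>+x. ennreal (- \<phi> x) \<partial>Q)"
    using le2 by (rule ereal_diff_positive)
  have eq: "KL P Q = enn2ereal (\<integral>\<^sup>+x. ennreal (\<phi> x) \<partial>Q) - enn2ereal (\<integral>\<^sup>+x. ennreal (- \<phi> x) \<partial>Q)"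
    unfolding KL_def Let_def \<phi>_def f_def by (simp only: ac if_True)
  show ?thesis unfolding eq by (rule nn)
qed


lemma KL_mix:
  assumes \<nu>: "\<nu> \<in> D_mM m M" "m \<le> M" and e: "0 < \<epsilon>" "\<epsilon> < 1" and x: "M < x"
  shows "KL \<nu> (mix \<nu> \<epsilon> x) = ereal (- ln (1 - \<epsilon>))"
proof -
  note F = D_mM_facts[OF \<nu>(1)]
  define Q where "Q = mix \<nu> \<epsilon> x"
  define c where "c = 1 / (1 - \<epsilon>)"
  have c1: "c \<ge> 1" using e by (simp add: c_def field_simps)
  define g where "g = (\<lambda>y. ennreal c * indicator {m..M} y)"
  have SQ: "sets Q = sets borel" unfolding Q_def by (rule sets_mix[OF F(1,2)])
  have PQ: "prob_space Q" unfolding Q_def by (rule prob_space_mix[OF F(1,2)]) (use e in auto)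
  have gm: "g \<in> borel_measurable Q" unfolding g_def measurable_cong_sets[OF SQ refl] by simp
  have dens: "density Q g = \<nu>"
  proof (rule measure_eqI)
    show "sets (density Q g) = sets \<nu>" using SQ F(2) by simp
    fix A assume "A \<in> sets (density Q g)"
    then have A: "A \<in> sets borel" using SQ by simp
    have "emeasure (density Q g) A = (\<integral>\<^sup>+y. g y * indicator A y \<partial>Q)"
      using A SQ gm by (subst emeasure_density) auto
    also have "\<dots> = ennreal \<epsilon> * (g x * indicator A x) + ennreal (1 - \<epsilon>) * (\<integral>\<^sup>+y. g y * indicator A y \<partial>\<nu>)"
      unfolding Q_def using A e by (intro nn_integral_mix[OF F(1,2)]) (auto simp: g_def)
    also have "g x = 0" using x by (simp add: g_def)
    also have "(\<integral>\<^sup>+y. g y * indicator A y \<partial>\<nu>) = (\<integral>\<^sup>+y. ennreal c * indicator A y \<partial>\<nu>)"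
      by (rule nn_integral_cong_AE) (use F(3) in \<open>auto simp: g_def\<close>)
    also have "\<dots> = ennreal c * emeasure \<nu> A"
      using A F(2) by (subst nn_integral_cmult_indicator) auto
    also have "ennreal \<epsilon> * (0 * indicator A x) + ennreal (1 - \<epsilon>) * (ennreal c * emeasure \<nu> A)
        = ennreal ((1 - \<epsilon>) * c) * emeasure \<nu> A"
      using e c1 by (simp add: ennreal_mult mult.assoc)
    also have "(1 - \<epsilon>) * c = 1" using e by (simp add: c_def)
    finally show "emeasure (density Q g) A = emeasure \<nu> A" by simp
  qed
  have ac: "absolutely_continuous Q \<nu>"
    using absolutely_continuousI_density[OF gm] unfolding dens .
  have RN: "AE y in Q. g y = RN_deriv Q \<nu> y"
    by (rule RN_deriv_unique_sigma_finite[OF gm dens]) (rule prob_space_imp_sigma_finite[OF F(1)])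
  have eqf: "AE y in Q. enn2real (RN_deriv Q \<nu> y) * ln (enn2real (RN_deriv Q \<nu> y)) = (c * ln c) * indicator {m..M} y"
    using RN
  proof (rule eventually_mono)
    fix y assume "g y = RN_deriv Q \<nu> y"
    then have "RN_deriv Q \<nu> y = ennreal c * indicator {m..M} y" by (simp add: g_def)
    then show "enn2real (RN_deriv Q \<nu> y) * ln (enn2real (RN_deriv Q \<nu> y)) = (c * ln c) * indicator {m..M} y"
      using c1 by (simp split: split_indicator)
  qed
  have cl: "c * ln c \<ge> 0" using c1 by simp
  have "(\<integral>\<^sup>+y. ennreal (enn2real (RN_deriv Q \<nu> y) * ln (enn2real (RN_deriv Q \<nu> y))) \<partial>Q)
      = (\<integral>\<^sup>+y. ennreal (c * ln c) * indicator {m..M} y \<partial>Q)"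
    using eqf by (rule nn_integral_cong_AE[OF eventually_mono]) (auto split: split_indicator)
  also have "\<dots> = ennreal (c * ln c) * emeasure Q {m..M}"
    using SQ by (subst nn_integral_cmult_indicator) auto
  also have "emeasure Q {m..M} = (\<integral>\<^sup>+y. indicator {m..M} y \<partial>Q)"
    using SQ by (simp add: nn_integral_indicator)
  also have "\<dots> = ennreal \<epsilon> * indicator {m..M} x + ennreal (1 - \<epsilon>) * (\<integral>\<^sup>+y. indicator {m..M} y \<partial>\<nu>)"
    unfolding Q_def using e by (intro nn_integral_mix[OF F(1,2)]) auto
  also have "(\<integral>\<^sup>+y. indicator {m..M} y \<partial>\<nu>) = 1"
    using F(2) \<nu>(1) by (simp add: nn_integral_indicator D_mM_def)
  also have "ennreal (c * ln c) * (ennreal \<epsilon> * indicator {m..M} x + ennreal (1 - \<epsilon>) * 1) = ennreal (ln c)"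
    using x e cl by (simp add: ennreal_mult[symmetric] c_def)
  finally have pos: "(\<integral>\<^sup>+y. ennreal (enn2real (RN_deriv Q \<nu> y) * ln (enn2real (RN_deriv Q \<nu> y))) \<partial>Q) = ennreal (ln c)" .
  have neg: "(\<integral>\<^sup>+y. ennreal (- (enn2real (RN_deriv Q \<nu> y) * ln (enn2real (RN_deriv Q \<nu> y)))) \<partial>Q) = 0"
  proof -
    have "(\<integral>\<^sup>+y. ennreal (- (enn2real (RN_deriv Q \<nu> y) * ln (enn2real (RN_deriv Q \<nu> y)))) \<partial>Q) = (\<integral>\<^sup>+y. 0 \<partial>Q)"
      using eqf by (rule nn_integral_cong_AE[OF eventually_mono]) (use cl in \<open>auto simp: ennreal_neg split: split_indicator\<close>)
    then show ?thesis by simp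
  qed
  have "ln c = - ln (1 - \<epsilon>)" using e by (simp add: c_def ln_div)
  moreover have l0: "0 \<le> - ln (1 - \<epsilon>)" using e by simp
  ultimately show ?thesis using ac pos neg c1 unfolding Q_def[symmetric]
    by (simp add: KL_def Let_def enn2ereal_ennreal zero_ennreal.rep_eq)
qed


lemma D_all_facts:
  assumes "\<nu> \<in> D_all"
  shows "prob_space \<nu>" "sets \<nu> = sets borel"
  using assms D_mM_facts unfolding D_all_def by blast+

lemma Kinf_zero:
  assumes \<nu>: "\<nu> \<in> D_mM m M" "m \<le> M"
    and DM: "\<And>M'. M \<le> M' \<Longrightarrow> D_mM m M' \<subseteq> D"
    and DD: "D \<subseteq> D_all"
  shows "Kinf \<nu> t D = 0"
proof (rule antisym)
  note F = D_mM_facts[OF \<nu>(1)]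
  show "0 \<le> Kinf \<nu> t D"
    unfolding Kinf_def
  proof (rule INF_greatest)
    fix \<nu>' assume "\<nu>' \<in> {\<nu>' \<in> D. t < mean \<nu>'}"
    then have "\<nu>' \<in> D_all" using DD by auto
    then show "0 \<le> KL \<nu> \<nu>'" using D_all_facts[of \<nu>'] F
      by (intro KL_nonneg) auto
  qed
  show "Kinf \<nu> t D \<le> 0"
  proof (rule ereal_le_epsilon2)
    fix e :: real assume e: "0 < e"
    define \<epsilon> where "\<epsilon> = 1 - exp (- e)"
    have e1: "0 < \<epsilon>" "\<epsilon> < 1" using e by (auto simp: \<epsilon>_def)
    define x where "x = max (M + 1) (m + (\<bar>t\<bar> + \<bar>m\<bar> + 1) / \<epsilon>)"
    have xM: "M < x" "M \<le> x" by (auto simp: x_def)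
    have "\<epsilon> * (x - m) \<ge> \<epsilon> * ((\<bar>t\<bar> + \<bar>m\<bar> + 1) / \<epsilon>)"
      using e1 by (intro mult_left_mono) (auto simp: x_def)
    then have ex: "\<epsilon> * (x - m) \<ge> \<bar>t\<bar> + \<bar>m\<bar> + 1" using e1 by simp
    have "mean (mix \<nu> \<epsilon> x) \<ge> m + \<epsilon> * (x - m)"
      by (rule mean_mix[OF \<nu>]) (use e1 xM in auto)
    then have mt: "t < mean (mix \<nu> \<epsilon> x)" using ex by linarith
    have "mix \<nu> \<epsilon> x \<in> D" using mix_D[OF \<nu>, of \<epsilon> x] DM[OF xM(2)] e1 xM by auto
    then have "Kinf \<nu> t D \<le> KL \<nu> (mix \<nu> \<epsilon> x)"
      unfolding Kinf_def using mt by (intro INF_lower) auto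
    also have "\<dots> = ereal (- ln (1 - \<epsilon>))" by (rule KL_mix[OF \<nu> e1 xM(1)])
    also have "- ln (1 - \<epsilon>) = e" by (simp add: \<epsilon>_def)
    finally show "Kinf \<nu> t D \<le> 0 + ereal e" by simp
  qed
qed


definition Cm :: "nat \<Rightarrow> (nat \<Rightarrow> real measure) \<Rightarrow> (real \<times> (nat \<Rightarrow> real)) measure" where
  "Cm K \<nu> = uniform_measure lborel {0..1::real} \<Otimes>\<^sub>M PiM {..<K} \<nu>"

definition agr :: "strategy \<Rightarrow> nat \<Rightarrow> (nat \<Rightarrow> real \<times> (nat \<Rightarrow> real)) \<Rightarrow> (nat \<Rightarrow> real \<times> (nat \<Rightarrow> real)) \<Rightarrow> bool" where
  "agr \<pi> T \<omega>1 \<omega>2 \<longleftrightarrow> (\<forall>s<T. fst (\<omega>1 s) = fst (\<omega>2 s) \<and> snd (\<omega>1 s) (arm \<pi> \<omega>1 s) = snd (\<omega>2 s) (arm \<pi> \<omega>2 s))"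

definition Nc :: "strategy \<Rightarrow> nat \<Rightarrow> (nat \<Rightarrow> real \<times> (nat \<Rightarrow> real)) \<Rightarrow> nat \<Rightarrow> nat" where
  "Nc \<pi> a \<omega> T = card {t\<in>{..<T}. arm \<pi> \<omega> t = a}"

lemma obs_hist_Suc': "obs_hist \<pi> \<omega> (Suc t) = (obs_hist \<pi> \<omega> t)(t := snd (\<omega> t) (arm \<pi> \<omega> t))"
  by (simp add: arm_def)

lemma obs_hist_ext: "obs_hist \<pi> \<omega> t \<in> extensional {..<t}"
  by (induction t) (auto simp: extensional_def)

lemma agr_Suc: "agr \<pi> (Suc T) \<omega>1 \<omega>2 \<longleftrightarrow> agr \<pi> T \<omega>1 \<omega>2 \<and> fst (\<omega>1 T) = fst (\<omega>2 T) \<and>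
    snd (\<omega>1 T) (arm \<pi> \<omega>1 T) = snd (\<omega>2 T) (arm \<pi> \<omega>2 T)"
  by (auto simp: agr_def less_Suc_eq)

lemma agr_obs: "agr \<pi> T \<omega>1 \<omega>2 \<Longrightarrow> obs_hist \<pi> \<omega>1 T = obs_hist \<pi> \<omega>2 T"
proof (induction T)
  case 0 then show ?case by simp
next
  case (Suc T)
  then have a: "agr \<pi> T \<omega>1 \<omega>2" and s: "snd (\<omega>1 T) (arm \<pi> \<omega>1 T) = snd (\<omega>2 T) (arm \<pi> \<omega>2 T)"
    by (auto simp: agr_Suc)
  show ?case by (simp only: obs_hist_Suc' Suc.IH[OF a] s)
qed

lemma agr_arm:
  assumes "agr \<pi> T \<omega>1 \<omega>2" "fst (\<omega>1 T) = fst (\<omega>2 T)"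
  shows "arm \<pi> \<omega>1 T = arm \<pi> \<omega>2 T"
proof -
  have "restrict (\<lambda>s. fst (\<omega>1 s)) {..T} = restrict (\<lambda>s. fst (\<omega>2 s)) {..T}"
    using assms by (auto simp: agr_def restrict_def le_less)
  then show ?thesis using agr_obs[OF assms(1)] by (simp add: arm_def)
qed

lemma agr_mono: "agr \<pi> T \<omega>1 \<omega>2 \<Longrightarrow> t \<le> T \<Longrightarrow> agr \<pi> t \<omega>1 \<omega>2"
  by (auto simp: agr_def)

lemma agr_arm_lt: "agr \<pi> T \<omega>1 \<omega>2 \<Longrightarrow> t < T \<Longrightarrow> arm \<pi> \<omega>1 t = arm \<pi> \<omega>2 t"
  by (rule agr_arm[OF agr_mono[of _ T]]) (auto simp: agr_def)

lemma agr_eq: "(\<And>s. s < T \<Longrightarrow> \<omega>1 s = \<omega>2 s) \<Longrightarrow> agr \<pi> T \<omega>1 \<omega>2"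
proof (induction T)
  case 0 then show ?case by (simp add: agr_def)
next
  case (Suc T)
  then have a: "agr \<pi> T \<omega>1 \<omega>2" by auto
  have e: "\<omega>1 T = \<omega>2 T" using Suc.prems by auto
  then have "arm \<pi> \<omega>1 T = arm \<pi> \<omega>2 T" using agr_arm[OF a] by simp
  then show ?case using a e by (simp add: agr_Suc)
qed

lemma agr_sym: "agr \<pi> T \<omega>1 \<omega>2 \<Longrightarrow> agr \<pi> T \<omega>2 \<omega>1"
  by (auto simp: agr_def)

lemma agr_trans: "agr \<pi> T \<omega>1 \<omega>2 \<Longrightarrow> agr \<pi> T \<omega>2 \<omega>3 \<Longrightarrow> agr \<pi> T \<omega>1 \<omega>3"
  by (auto simp: agr_def)

lemma agr_upd: "agr \<pi> T \<omega>1 \<omega>2 \<Longrightarrow> agr \<pi> T (\<omega>1(T := c)) (\<omega>2(T := c))"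
proof -
  assume a: "agr \<pi> T \<omega>1 \<omega>2"
  have "agr \<pi> T (\<omega>1(T := c)) \<omega>1" by (rule agr_eq) simp
  moreover have "agr \<pi> T \<omega>2 (\<omega>2(T := c))" by (rule agr_eq) simp
  ultimately show ?thesis using a by (blast intro: agr_trans)
qed

lemma Nc_agr: "agr \<pi> T \<omega>1 \<omega>2 \<Longrightarrow> Nc \<pi> a \<omega>1 T = Nc \<pi> a \<omega>2 T"
  unfolding Nc_def by (rule arg_cong[where f=card]) (auto dest: agr_arm_lt)

lemma Nc_Suc: "Nc \<pi> a \<omega> (Suc T) = Nc \<pi> a \<omega> T + (if arm \<pi> \<omega> T = a then 1 else 0)"
proof -
  have "{t\<in>{..<Suc T}. arm \<pi> \<omega> t = a} = (if arm \<pi> \<omega> T = a then insert T {t\<in>{..<T}. arm \<pi> \<omega> t = a} else {t\<in>{..<T}. arm \<pi> \<omega> t = a})"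
    by (auto simp: less_Suc_eq)
  then show ?thesis by (simp add: Nc_def)
qed

lemma Nc_le: "Nc \<pi> a \<omega> T \<le> T"
  unfolding Nc_def by (rule order.trans[OF card_mono[of "{..<T}"]]) auto

lemma Nc_sum: "real (Nc \<pi> a \<omega> T) = (\<Sum>t<T. if arm \<pi> \<omega> t = a then 1 else 0)"
proof (induction T)
  case 0 then show ?case by (simp add: Nc_def)
next
  case (Suc T) then show ?case by (simp only: Nc_Suc sum.lessThan_Suc of_nat_add) simp
qed

lemma arm_lt:
  assumes "is_strategy K \<pi>"
  shows "arm \<pi> \<omega> t < K"
proof -
  have m: "(\<lambda>(u, y). \<pi> t u y) \<in> measurable (PiM {..t} (\<lambda>_. borel :: real measure) \<Otimes>\<^sub>M PiM {..<t} (\<lambda>_. borel :: real measure)) (count_space {..<K})"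
    using assms by (simp add: is_strategy_def)
  have "(restrict (\<lambda>s. fst (\<omega> s)) {..t}, obs_hist \<pi> \<omega> t) \<in> space (PiM {..t} (\<lambda>_. borel :: real measure) \<Otimes>\<^sub>M PiM {..<t} (\<lambda>_. borel :: real measure))"
    using obs_hist_ext[of \<pi> \<omega> t] by (simp add: space_pair_measure space_PiM PiE_def Pi_def)
  from measurable_space[OF m this] show ?thesis by (simp add: arm_def)
qed


context
  fixes K :: nat and \<nu> :: "nat \<Rightarrow> real measure" and \<pi> :: strategy and I :: "nat set"
  assumes S\<nu>: "\<And>b. b < K \<Longrightarrow> sets (\<nu> b) = sets borel"
    and strat: "is_strategy K \<pi>"
begin

lemma meas_fst_comp:
  assumes s: "s \<in> I"
  shows "(\<lambda>\<omega>. fst (\<omega> s)) \<in> borel_measurable (PiM I (\<lambda>_. Cm K \<nu>))"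
proof -
  have "(\<lambda>\<omega>. fst (\<omega> s)) \<in> measurable (PiM I (\<lambda>_. Cm K \<nu>)) (uniform_measure lborel {0..1::real})"
    unfolding Cm_def by (rule measurable_compose[OF measurable_component_singleton[OF s] measurable_fst])
  moreover have "measurable (PiM I (\<lambda>_. Cm K \<nu>)) (uniform_measure lborel {0..1::real}) = measurable (PiM I (\<lambda>_. Cm K \<nu>)) borel"
    by (rule measurable_cong_sets) auto
  ultimately show ?thesis by simp
qed

lemma meas_snd_comp:
  assumes s: "s \<in> I" and i: "i < K"
  shows "(\<lambda>\<omega>. snd (\<omega> s) i) \<in> borel_measurable (PiM I (\<lambda>_. Cm K \<nu>))"
proof -
  have "(\<lambda>\<omega>. snd (\<omega> s)) \<in> measurable (PiM I (\<lambda>_. Cm K \<nu>)) (PiM {..<K} \<nu>)"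
    unfolding Cm_def by (rule measurable_compose[OF measurable_component_singleton[OF s] measurable_snd])
  then have "(\<lambda>\<omega>. snd (\<omega> s) i) \<in> measurable (PiM I (\<lambda>_. Cm K \<nu>)) (\<nu> i)"
    by (rule measurable_compose[OF _ measurable_component_singleton]) (use i in simp)
  moreover have "measurable (PiM I (\<lambda>_. Cm K \<nu>)) (\<nu> i) = measurable (PiM I (\<lambda>_. Cm K \<nu>)) borel"
    by (rule measurable_cong_sets) (auto simp: S\<nu>[OF i])
  ultimately show ?thesis by simp
qed

lemma meas_arm_of_obs:
  assumes t: "{..t} \<subseteq> I"
    and obs: "(\<lambda>\<omega>. obs_hist \<pi> \<omega> t) \<in> measurable (PiM I (\<lambda>_. Cm K \<nu>)) (PiM {..<t} (\<lambda>_. borel :: real measure))"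
  shows "(\<lambda>\<omega>. arm \<pi> \<omega> t) \<in> measurable (PiM I (\<lambda>_. Cm K \<nu>)) (count_space {..<K})"
proof -
  have r: "(\<lambda>\<omega>. restrict (\<lambda>s. fst (\<omega> s)) {..t}) \<in> measurable (PiM I (\<lambda>_. Cm K \<nu>)) (PiM {..t} (\<lambda>_. borel :: real measure))"
    by (rule measurable_restrict) (use t in \<open>auto intro: meas_fst_comp\<close>)
  have p: "(\<lambda>(u, y). \<pi> t u y) \<in> measurable (PiM {..t} (\<lambda>_. borel :: real measure) \<Otimes>\<^sub>M PiM {..<t} (\<lambda>_. borel :: real measure)) (count_space {..<K})"
    using strat by (simp add: is_strategy_def)
  have "(\<lambda>\<omega>. (\<lambda>(u, y). \<pi> t u y) (restrict (\<lambda>s. fst (\<omega> s)) {..t}, obs_hist \<pi> \<omega> t)) \<in> measurable (PiM I (\<lambda>_. Cm K \<nu>)) (count_space {..<K})"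
    by (rule measurable_compose[OF measurable_Pair[OF r obs] p])
  then show ?thesis by (simp add: arm_def)
qed

lemma meas_obs:
  "{..<t} \<subseteq> I \<Longrightarrow> (\<lambda>\<omega>. obs_hist \<pi> \<omega> t) \<in> measurable (PiM I (\<lambda>_. Cm K \<nu>)) (PiM {..<t} (\<lambda>_. borel :: real measure))"
proof (induction t)
  case 0
  show ?case by (simp add: space_PiM_empty)
next
  case (Suc t)
  have sub: "{..<t} \<subseteq> I" "{..t} \<subseteq> I" "t \<in> I" using Suc.prems by auto
  have obs: "(\<lambda>\<omega>. obs_hist \<pi> \<omega> t) \<in> measurable (PiM I (\<lambda>_. Cm K \<nu>)) (PiM {..<t} (\<lambda>_. borel :: real measure))"
    by (rule Suc.IH[OF sub(1)])
  have arm: "(\<lambda>\<omega>. arm \<pi> \<omega> t) \<in> measurable (PiM I (\<lambda>_. Cm K \<nu>)) (count_space {..<K})"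
    by (rule meas_arm_of_obs[OF sub(2) obs])
  have h: "(\<lambda>\<omega>. snd (\<omega> t) (arm \<pi> \<omega> t)) \<in> borel_measurable (PiM I (\<lambda>_. Cm K \<nu>))"
    by (rule measurable_compose_countable'[where f="\<lambda>i \<omega>. snd (\<omega> t) i", OF _ arm]) (auto intro: meas_snd_comp[OF sub(3)])
  have "(\<lambda>\<omega>. (obs_hist \<pi> \<omega> t)(t := snd (\<omega> t) (arm \<pi> \<omega> t))) \<in> measurable (PiM I (\<lambda>_. Cm K \<nu>)) (PiM {..<Suc t} (\<lambda>_. borel :: real measure))"
    by (rule measurable_fun_upd[OF _ obs]) (use h in auto)
  then show ?case by (simp only: obs_hist_Suc')
qed

lemma meas_arm:
  "{..t} \<subseteq> I \<Longrightarrow> (\<lambda>\<omega>. arm \<pi> \<omega> t) \<in> measurable (PiM I (\<lambda>_. Cm K \<nu>)) (count_space {..<K})"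
  by (rule meas_arm_of_obs) (auto intro!: meas_obs)

lemma meas_arm_fun:
  assumes "{..t} \<subseteq> I" "g \<in> {..<K} \<rightarrow> space N"
  shows "(\<lambda>\<omega>. g (arm \<pi> \<omega> t)) \<in> measurable (PiM I (\<lambda>_. Cm K \<nu>)) N"
  by (rule measurable_compose[OF meas_arm[OF assms(1)]]) (use assms(2) in \<open>simp add: measurable_count_space_eq1\<close>)

end


definition W :: "strategy \<Rightarrow> nat \<Rightarrow> real \<Rightarrow> (nat \<Rightarrow> real \<times> (nat \<Rightarrow> real)) \<Rightarrow> nat \<Rightarrow> ennreal" where
  "W \<pi> a q \<omega> T = (\<Prod>t<T. if arm \<pi> \<omega> t = a then ennreal q else 1)"

lemma W_Suc: "W \<pi> a q \<omega> (Suc T) = W \<pi> a q \<omega> T * (if arm \<pi> \<omega> T = a then ennreal q else 1)"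
  by (simp add: W_def)

lemma W_agr: "agr \<pi> T \<omega>1 \<omega>2 \<Longrightarrow> W \<pi> a q \<omega>1 T = W \<pi> a q \<omega>2 T"
  unfolding W_def by (rule prod.cong) (auto dest: agr_arm_lt)

lemma W_Nc: "W \<pi> a q \<omega> T = ennreal q ^ Nc \<pi> a \<omega> T"
proof (induction T)
  case 0 then show ?case by (simp add: W_def Nc_def)
next
  case (Suc T) then show ?case by (simp add: W_Suc Nc_Suc power_add)
qed

lemma prob_space_Cm:
  assumes "\<And>b. b < K \<Longrightarrow> prob_space (\<nu> b)"
  shows "prob_space (Cm K \<nu>)"
  unfolding Cm_def
  by (intro prob_space_pair prob_space_uniform_measure prob_space_PiM) (auto simp: assms)

lemma sets_PiM_Cm:
  assumes "\<And>b. b < K \<Longrightarrow> sets (\<nu> b) = sets (\<nu>' b)"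
  shows "sets (PiM I (\<lambda>_. Cm K \<nu>)) = sets (PiM I (\<lambda>_. Cm K \<nu>'))"
  unfolding Cm_def
  by (intro sets_PiM_cong refl sets_pair_measure_cong) (auto simp: assms)

lemma space_PiM_Cm:
  assumes "\<And>b. b < K \<Longrightarrow> sets (\<nu> b) = sets (\<nu>' b)"
  shows "space (PiM I (\<lambda>_. Cm K \<nu>)) = space (PiM I (\<lambda>_. Cm K \<nu>'))"
  by (rule sets_eq_imp_space_eq[OF sets_PiM_Cm[OF assms]])


context
  fixes K :: nat and \<nu> \<nu>' :: "nat \<Rightarrow> real measure" and \<pi> :: strategy and a :: nat and q :: real
  assumes P: "\<And>b. b < K \<Longrightarrow> prob_space (\<nu> b)" "\<And>b. b < K \<Longrightarrow> sets (\<nu> b) = sets borel"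
    and P': "\<And>b. b < K \<Longrightarrow> prob_space (\<nu>' b)" "\<And>b. b < K \<Longrightarrow> sets (\<nu>' b) = sets borel"
    and same: "\<And>b. b < K \<Longrightarrow> b \<noteq> a \<Longrightarrow> \<nu>' b = \<nu> b"
    and dom: "\<And>\<phi>. \<phi> \<in> borel_measurable borel \<Longrightarrow> ennreal q * (\<integral>\<^sup>+y. \<phi> y \<partial>\<nu> a) \<le> (\<integral>\<^sup>+y. \<phi> y \<partial>\<nu>' a)"
    and strat: "is_strategy K \<pi>"
begin

lemma Ceq: "\<And>b. b < K \<Longrightarrow> sets (\<nu> b) = sets (\<nu>' b)" using P P' by simp

lemma inner_step:
  assumes w: "w \<in> space (PiM {..<T} (\<lambda>_. Cm K \<nu>))"
    and Fm: "F \<in> borel_measurable (PiM (insert T {..<T}) (\<lambda>_. Cm K \<nu>))"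
    and Finv: "\<And>w1 w2. agr \<pi> (Suc T) w1 w2 \<Longrightarrow> F w1 = F w2"
  shows "(\<integral>\<^sup>+c. (if arm \<pi> (w(T := c)) T = a then ennreal q else 1) * F (w(T := c)) \<partial>Cm K \<nu>)
      \<le> (\<integral>\<^sup>+c. F (w(T := c)) \<partial>Cm K \<nu>')"
proof -
  define U where "U = uniform_measure lborel {0..1::real}"
  define X where "X = PiM {..<K} \<nu>"
  define X' where "X' = PiM {..<K} \<nu>'"
  have CU: "Cm K \<nu> = U \<Otimes>\<^sub>M X" "Cm K \<nu>' = U \<Otimes>\<^sub>M X'" by (simp_all add: Cm_def U_def X_def X'_def)
  have pX: "prob_space X" unfolding X_def by (rule prob_space_PiM) (simp add: P)
  have pX': "prob_space X'" unfolding X'_def by (rule prob_space_PiM) (simp add: P')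
  have w': "w \<in> space (PiM {..<T} (\<lambda>_. Cm K \<nu>'))" using w space_PiM_Cm[of K \<nu> \<nu>', OF Ceq] by metis
  have Fm': "F \<in> borel_measurable (PiM (insert T {..<T}) (\<lambda>_. Cm K \<nu>'))"
    using Fm measurable_cong_sets[OF sets_PiM_Cm[of K \<nu> \<nu>', OF Ceq] refl, of "insert T {..<T}" borel] by metis
  have upd: "(\<lambda>c. w(T := c)) \<in> measurable (Cm K \<nu>) (PiM (insert T {..<T}) (\<lambda>_. Cm K \<nu>))"
    using measurable_component_update[OF w, of T] by simp
  have upd': "(\<lambda>c. w(T := c)) \<in> measurable (Cm K \<nu>') (PiM (insert T {..<T}) (\<lambda>_. Cm K \<nu>'))"
    using measurable_component_update[OF w', of T] by simp
  define fac where "fac = (\<lambda>w'. if arm \<pi> w' T = a then ennreal q else 1)"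
  have facm: "fac \<in> borel_measurable (PiM (insert T {..<T}) (\<lambda>_. Cm K \<nu>))"
    unfolding fac_def
    by (rule meas_arm_fun[OF P(2) strat, where g="\<lambda>b. if b = a then ennreal q else 1"]) auto
  have m1: "(\<lambda>c. fac (w(T := c)) * F (w(T := c))) \<in> borel_measurable (U \<Otimes>\<^sub>M X)"
    unfolding CU[symmetric] using facm Fm upd by measurable
  have m2: "(\<lambda>c. F (w(T := c))) \<in> borel_measurable (U \<Otimes>\<^sub>M X')"
    unfolding CU[symmetric] using Fm' upd' by measurable
  have L: "(\<integral>\<^sup>+c. fac (w(T := c)) * F (w(T := c)) \<partial>Cm K \<nu>)
      = (\<integral>\<^sup>+u. \<integral>\<^sup>+x. fac (w(T := (u, x))) * F (w(T := (u, x))) \<partial>X \<partial>U)"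
    unfolding CU using sigma_finite_measure.nn_integral_fst[OF prob_space_imp_sigma_finite[OF pX] m1] by simp
  have R: "(\<integral>\<^sup>+c. F (w(T := c)) \<partial>Cm K \<nu>')
      = (\<integral>\<^sup>+u. \<integral>\<^sup>+x. F (w(T := (u, x))) \<partial>X' \<partial>U)"
    unfolding CU using sigma_finite_measure.nn_integral_fst[OF prob_space_imp_sigma_finite[OF pX'] m2] by simp
  have "(\<integral>\<^sup>+u. \<integral>\<^sup>+x. fac (w(T := (u, x))) * F (w(T := (u, x))) \<partial>X \<partial>U)
      \<le> (\<integral>\<^sup>+u. \<integral>\<^sup>+x. F (w(T := (u, x))) \<partial>X' \<partial>U)"
  proof (rule nn_integral_mono)
    fix u assume u: "u \<in> space U"
    define b where "b = arm \<pi> (w(T := (u, \<lambda>_. 0))) T"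
    have bK: "b < K" unfolding b_def by (rule arm_lt[OF strat])
    have armb: "arm \<pi> (w(T := (u, x))) T = b" for x
      unfolding b_def by (rule agr_arm) (auto intro: agr_eq)
    define z where "z = restrict (\<lambda>_. 0::real) ({..<K} - {b})"
    define \<phi> where "\<phi> = (\<lambda>r. F (w(T := (u, z(b := r)))))"
    have Feq: "F (w(T := (u, x))) = \<phi> (x b)" for x
      unfolding \<phi>_def
    proof (rule Finv)
      have a1: "agr \<pi> T (w(T := (u, x))) (w(T := (u, z(b := x b))))" by (rule agr_eq) simp
      show "agr \<pi> (Suc T) (w(T := (u, x))) (w(T := (u, z(b := x b))))"
        unfolding agr_Suc using a1 armb[of x] armb[of "z(b := x b)"] by simp
    qed
    have zsp: "z \<in> space (PiM ({..<K} - {b}) \<nu>)" unfolding z_def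
      by (auto simp: space_PiM sets_eq_imp_space_eq[OF P(2)])
    have zm: "(\<lambda>r. z(b := r)) \<in> measurable borel X"
      unfolding X_def
    proof (rule measurable_fun_upd[where J="{..<K} - {b}"])
      show "{..<K} = ({..<K} - {b}) \<union> {b}" using bK by auto
      show "(\<lambda>r. z) \<in> measurable borel (PiM ({..<K} - {b}) \<nu>)" using zsp by simp
      show "(\<lambda>r. r) \<in> measurable borel (\<nu> b)"
        using measurable_ident_sets[OF P(2)[OF bK, symmetric]] .
    qed
    have usp: "u \<in> space U" by fact
    have pm: "(\<lambda>r. (u, z(b := r))) \<in> measurable borel (Cm K \<nu>)"
      unfolding CU using zm usp by measurable
    have \<phi>m: "\<phi> \<in> borel_measurable borel"
      unfolding \<phi>_def using Fm upd pm by measurable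
    have \<phi>m1: "\<phi> \<in> borel_measurable (\<nu> b)" using \<phi>m measurable_cong_sets[OF P(2)[OF bK] refl] by metis
    have \<phi>m2: "\<phi> \<in> borel_measurable (\<nu>' b)" using \<phi>m measurable_cong_sets[OF P'(2)[OF bK] refl] by metis
    have I1: "(\<integral>\<^sup>+x. \<phi> (x b) \<partial>X) = (\<integral>\<^sup>+r. \<phi> r \<partial>\<nu> b)"
    proof -
      have "(\<integral>\<^sup>+r. \<phi> r \<partial>\<nu> b) = (\<integral>\<^sup>+r. \<phi> r \<partial>distr X (\<nu> b) (\<lambda>x. x b))"
        unfolding X_def using distr_PiM_component[of "{..<K}" \<nu> b] P bK by simp
      also have "\<dots> = (\<integral>\<^sup>+x. \<phi> (x b) \<partial>X)"
        by (rule nn_integral_distr) (use \<phi>m1 bK in \<open>auto simp: X_def\<close>)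
      finally show ?thesis by simp
    qed
    have I2: "(\<integral>\<^sup>+x. \<phi> (x b) \<partial>X') = (\<integral>\<^sup>+r. \<phi> r \<partial>\<nu>' b)"
    proof -
      have "(\<integral>\<^sup>+r. \<phi> r \<partial>\<nu>' b) = (\<integral>\<^sup>+r. \<phi> r \<partial>distr X' (\<nu>' b) (\<lambda>x. x b))"
        unfolding X'_def using distr_PiM_component[of "{..<K}" \<nu>' b] P' bK by simp
      also have "\<dots> = (\<integral>\<^sup>+x. \<phi> (x b) \<partial>X')"
        by (rule nn_integral_distr) (use \<phi>m2 bK in \<open>auto simp: X'_def\<close>)
      finally show ?thesis by simp
    qed
    have "(\<integral>\<^sup>+x. fac (w(T := (u, x))) * F (w(T := (u, x))) \<partial>X) = (\<integral>\<^sup>+x. fac (w(T := (u, z))) * \<phi> (x b) \<partial>X)"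
      by (rule nn_integral_cong) (simp add: Feq fac_def armb)
    also have "\<dots> = fac (w(T := (u, z))) * (\<integral>\<^sup>+x. \<phi> (x b) \<partial>X)"
      by (rule nn_integral_cmult) (use \<phi>m1 bK in \<open>simp add: X_def\<close>)
    also have "\<dots> = fac (w(T := (u, z))) * (\<integral>\<^sup>+r. \<phi> r \<partial>\<nu> b)" by (simp add: I1)
    also have "\<dots> \<le> (\<integral>\<^sup>+r. \<phi> r \<partial>\<nu>' b)"
    proof (cases "b = a")
      case True
      then show ?thesis using dom[OF \<phi>m] by (simp add: fac_def armb)
    next
      case False
      then show ?thesis using same[OF bK False] by (simp add: fac_def armb)
    qed
    also have "\<dots> = (\<integral>\<^sup>+x. \<phi> (x b) \<partial>X')" by (simp add: I2)
    also have "\<dots> = (\<integral>\<^sup>+x. F (w(T := (u, x))) \<partial>X')"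
      by (rule nn_integral_cong) (simp add: Feq)
    finally show "(\<integral>\<^sup>+x. fac (w(T := (u, x))) * F (w(T := (u, x))) \<partial>X) \<le> (\<integral>\<^sup>+x. F (w(T := (u, x))) \<partial>X')" .
  qed
  then show ?thesis using L R by (simp add: fac_def)
qed


lemma change:
  "F \<in> borel_measurable (PiM {..<T} (\<lambda>_. Cm K \<nu>)) \<Longrightarrow> (\<And>w1 w2. agr \<pi> T w1 w2 \<Longrightarrow> F w1 = F w2) \<Longrightarrow>
   (\<integral>\<^sup>+w. W \<pi> a q w T * F w \<partial>PiM {..<T} (\<lambda>_. Cm K \<nu>)) \<le> (\<integral>\<^sup>+w. F w \<partial>PiM {..<T} (\<lambda>_. Cm K \<nu>'))"
proof (induction T arbitrary: F)
  case 0
  have "PiM {..<0::nat} (\<lambda>_. Cm K \<nu>) = PiM {..<0} (\<lambda>_. Cm K \<nu>')" by (simp add: PiM_empty)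
  then show ?case by (simp add: W_def)
next
  case (Suc T)
  note Fm0 = Suc.prems(1) and Finv = Suc.prems(2)
  have ins: "{..<Suc T} = insert T {..<T}" by auto
  have Fm: "F \<in> borel_measurable (PiM (insert T {..<T}) (\<lambda>_. Cm K \<nu>))" using Fm0 ins by simp
  have Fm': "F \<in> borel_measurable (PiM (insert T {..<T}) (\<lambda>_. Cm K \<nu>'))"
    using Fm measurable_cong_sets[OF sets_PiM_Cm[of K \<nu> \<nu>', OF Ceq] refl, of "insert T {..<T}" borel] by metis
  have pC: "prob_space (Cm K \<nu>)" by (rule prob_space_Cm) (rule P)
  have pC': "prob_space (Cm K \<nu>')" by (rule prob_space_Cm) (rule P')
  interpret PS: product_sigma_finite "\<lambda>_::nat. Cm K \<nu>"
    by (simp add: product_sigma_finite_def prob_space_imp_sigma_finite[OF pC])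
  interpret PS': product_sigma_finite "\<lambda>_::nat. Cm K \<nu>'"
    by (simp add: product_sigma_finite_def prob_space_imp_sigma_finite[OF pC'])
  define fac where "fac = (\<lambda>w'. if arm \<pi> w' T = a then ennreal q else 1)"
  define G where "G = (\<lambda>w. \<integral>\<^sup>+c. fac (w(T := c)) * F (w(T := c)) \<partial>Cm K \<nu>)"
  have facm: "fac \<in> borel_measurable (PiM (insert T {..<T}) (\<lambda>_. Cm K \<nu>))"
    unfolding fac_def
    by (rule meas_arm_fun[OF P(2) strat, where g="\<lambda>b. if b = a then ennreal q else 1"]) auto
  have Gm: "G \<in> borel_measurable (PiM {..<T} (\<lambda>_. Cm K \<nu>))"
  proof -
    have ad: "(\<lambda>(w, c). w(T := c)) \<in> measurable (PiM {..<T} (\<lambda>_. Cm K \<nu>) \<Otimes>\<^sub>M Cm K \<nu>) (PiM (insert T {..<T}) (\<lambda>_. Cm K \<nu>))"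
      using measurable_add_dim[of T "{..<T}" "\<lambda>_. Cm K \<nu>"] by simp
    have Hm: "(\<lambda>x. fac ((\<lambda>(w, c). w(T := c)) x) * F ((\<lambda>(w, c). w(T := c)) x)) \<in> borel_measurable (PiM {..<T} (\<lambda>_. Cm K \<nu>) \<Otimes>\<^sub>M Cm K \<nu>)"
      by (rule measurable_compose[OF ad, where g="\<lambda>w'. fac w' * F w'"]) (use facm Fm in measurable)
    have "(\<lambda>(w, c). fac (w(T := c)) * F (w(T := c))) \<in> borel_measurable (PiM {..<T} (\<lambda>_. Cm K \<nu>) \<Otimes>\<^sub>M Cm K \<nu>)"
      using Hm by (simp add: split_beta')
    then show ?thesis unfolding G_def
      by (rule sigma_finite_measure.borel_measurable_nn_integral[OF prob_space_imp_sigma_finite[OF pC]])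
  qed
  have Ginv: "G w1 = G w2" if a: "agr \<pi> T w1 w2" for w1 w2
    unfolding G_def
  proof (rule nn_integral_cong)
    fix c
    have a': "agr \<pi> T (w1(T := c)) (w2(T := c))" by (rule agr_upd[OF a])
    have ar: "arm \<pi> (w1(T := c)) T = arm \<pi> (w2(T := c)) T" by (rule agr_arm[OF a']) simp
    have "F (w1(T := c)) = F (w2(T := c))" by (rule Finv) (simp only: agr_Suc a' ar fun_upd_same simp_thms)
    then show "fac (w1(T := c)) * F (w1(T := c)) = fac (w2(T := c)) * F (w2(T := c))" by (simp add: fac_def ar)
  qed
  have IH: "(\<integral>\<^sup>+w. W \<pi> a q w T * G w \<partial>PiM {..<T} (\<lambda>_. Cm K \<nu>)) \<le> (\<integral>\<^sup>+w. G w \<partial>PiM {..<T} (\<lambda>_. Cm K \<nu>'))"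
    by (rule Suc.IH[OF Gm Ginv])
  have Gle: "(\<integral>\<^sup>+w. G w \<partial>PiM {..<T} (\<lambda>_. Cm K \<nu>')) \<le> (\<integral>\<^sup>+w. \<integral>\<^sup>+c. F (w(T := c)) \<partial>Cm K \<nu>' \<partial>PiM {..<T} (\<lambda>_. Cm K \<nu>'))"
  proof (rule nn_integral_mono)
    fix w assume "w \<in> space (PiM {..<T} (\<lambda>_. Cm K \<nu>'))"
    then have w: "w \<in> space (PiM {..<T} (\<lambda>_. Cm K \<nu>))" using space_PiM_Cm[of K \<nu> \<nu>', OF Ceq] by metis
    show "G w \<le> (\<integral>\<^sup>+c. F (w(T := c)) \<partial>Cm K \<nu>')"
      unfolding G_def fac_def by (rule inner_step[OF w Fm Finv])
  qed
  have Rm: "(\<lambda>w. W \<pi> a q w (Suc T) * F w) \<in> borel_measurable (PiM (insert T {..<T}) (\<lambda>_. Cm K \<nu>))"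
  proof -
    have "(\<lambda>w. W \<pi> a q w (Suc T)) \<in> borel_measurable (PiM (insert T {..<T}) (\<lambda>_. Cm K \<nu>))"
      unfolding W_def
      by (rule borel_measurable_prod_ennreal, rule meas_arm_fun[OF P(2) strat]) auto
    then show ?thesis using Fm by measurable
  qed
  have "(\<integral>\<^sup>+w. W \<pi> a q w (Suc T) * F w \<partial>PiM {..<Suc T} (\<lambda>_. Cm K \<nu>))
     = (\<integral>\<^sup>+w. \<integral>\<^sup>+c. W \<pi> a q (w(T := c)) (Suc T) * F (w(T := c)) \<partial>Cm K \<nu> \<partial>PiM {..<T} (\<lambda>_. Cm K \<nu>))"
    unfolding ins by (rule PS.product_nn_integral_insert[OF _ _ Rm]) auto
  also have "\<dots> = (\<integral>\<^sup>+w. W \<pi> a q w T * G w \<partial>PiM {..<T} (\<lambda>_. Cm K \<nu>))"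
  proof (rule nn_integral_cong)
    fix w assume w: "w \<in> space (PiM {..<T} (\<lambda>_. Cm K \<nu>))"
    have upd: "(\<lambda>c. w(T := c)) \<in> measurable (Cm K \<nu>) (PiM (insert T {..<T}) (\<lambda>_. Cm K \<nu>))"
      using measurable_component_update[OF w, of T] by simp
    have eq: "W \<pi> a q (w(T := c)) (Suc T) * F (w(T := c)) = W \<pi> a q w T * (fac (w(T := c)) * F (w(T := c)))" for c
    proof -
      have "W \<pi> a q (w(T := c)) T = W \<pi> a q w T" by (rule W_agr) (rule agr_eq, simp)
      then show ?thesis by (simp add: W_Suc fac_def mult.assoc)
    qed
    have "(\<integral>\<^sup>+c. W \<pi> a q (w(T := c)) (Suc T) * F (w(T := c)) \<partial>Cm K \<nu>) = (\<integral>\<^sup>+c. W \<pi> a q w T * (fac (w(T := c)) * F (w(T := c))) \<partial>Cm K \<nu>)"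
      by (simp only: eq)
    also have "\<dots> = W \<pi> a q w T * G w"
      unfolding G_def by (rule nn_integral_cmult) (use facm Fm upd in measurable)
    finally show "(\<integral>\<^sup>+c. W \<pi> a q (w(T := c)) (Suc T) * F (w(T := c)) \<partial>Cm K \<nu>) = W \<pi> a q w T * G w" .
  qed
  also have "\<dots> \<le> (\<integral>\<^sup>+w. G w \<partial>PiM {..<T} (\<lambda>_. Cm K \<nu>'))" by (rule IH)
  also have "\<dots> \<le> (\<integral>\<^sup>+w. \<integral>\<^sup>+c. F (w(T := c)) \<partial>Cm K \<nu>' \<partial>PiM {..<T} (\<lambda>_. Cm K \<nu>'))" by (rule Gle)
  also have "\<dots> = (\<integral>\<^sup>+w. F w \<partial>PiM {..<Suc T} (\<lambda>_. Cm K \<nu>'))"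
    unfolding ins by (rule PS'.product_nn_integral_insert[symmetric, OF _ _ Fm']) auto
  finally show ?case .
qed

end


lemma bandit_space_Cm: "bandit_space K \<nu> = PiM UNIV (\<lambda>_. Cm K \<nu>)"
  by (simp add: bandit_space_def Cm_def)

lemma transport:
  assumes P: "\<And>b. b < K \<Longrightarrow> prob_space (\<nu> b)"
    and Fm: "F \<in> borel_measurable (PiM {..<T} (\<lambda>_. Cm K \<nu>))"
    and Finv: "\<And>w. F (restrict w {..<T}) = F w"
  shows "(\<integral>\<^sup>+w. F w \<partial>PiM {..<T} (\<lambda>_. Cm K \<nu>)) = (\<integral>\<^sup>+w. F w \<partial>bandit_space K \<nu>)"
proof -
  have pC: "prob_space (Cm K \<nu>)" by (rule prob_space_Cm) (rule P)
  have PP: "product_prob_space (\<lambda>_::nat. Cm K \<nu>)"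
    by (simp add: product_prob_space_def product_prob_space_axioms_def product_sigma_finite_def
        prob_space_imp_sigma_finite[OF pC] pC)
  have D: "distr (PiM UNIV (\<lambda>_. Cm K \<nu>)) (PiM {..<T} (\<lambda>_. Cm K \<nu>)) (\<lambda>w. restrict w {..<T}) = PiM {..<T} (\<lambda>_. Cm K \<nu>)"
  proof (rule measure_eqI)
    show "sets (distr (PiM UNIV (\<lambda>_. Cm K \<nu>)) (PiM {..<T} (\<lambda>_. Cm K \<nu>)) (\<lambda>w. restrict w {..<T})) = sets (PiM {..<T} (\<lambda>_. Cm K \<nu>))"
      by simp
    fix X assume "X \<in> sets (distr (PiM UNIV (\<lambda>_. Cm K \<nu>)) (PiM {..<T} (\<lambda>_. Cm K \<nu>)) (\<lambda>w. restrict w {..<T}))"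
    then have X: "X \<in> sets (PiM {..<T} (\<lambda>_. Cm K \<nu>))" by simp
    have "emeasure (distr (PiM UNIV (\<lambda>_. Cm K \<nu>)) (PiM {..<T} (\<lambda>_. Cm K \<nu>)) (\<lambda>w. restrict w {..<T})) X
        = emeasure (PiM UNIV (\<lambda>_. Cm K \<nu>)) (prod_emb UNIV (\<lambda>_. Cm K \<nu>) {..<T} X)"
      by (rule emeasure_distr_restrict[OF _ refl X]) simp
    also have "\<dots> = emeasure (PiM {..<T} (\<lambda>_. Cm K \<nu>)) X"
      by (rule product_prob_space.emeasure_PiM_emb'[OF PP _ _ X]) auto
    finally show "emeasure (distr (PiM UNIV (\<lambda>_. Cm K \<nu>)) (PiM {..<T} (\<lambda>_. Cm K \<nu>)) (\<lambda>w. restrict w {..<T})) X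
        = emeasure (PiM {..<T} (\<lambda>_. Cm K \<nu>)) X" .
  qed
  have "(\<integral>\<^sup>+w. F w \<partial>PiM {..<T} (\<lambda>_. Cm K \<nu>)) = (\<integral>\<^sup>+w. F w \<partial>distr (PiM UNIV (\<lambda>_. Cm K \<nu>)) (PiM {..<T} (\<lambda>_. Cm K \<nu>)) (\<lambda>w. restrict w {..<T}))"
    by (simp only: D)
  also have "\<dots> = (\<integral>\<^sup>+w. F (restrict w {..<T}) \<partial>PiM UNIV (\<lambda>_. Cm K \<nu>))"
    by (rule nn_integral_distr) (use Fm in \<open>auto intro!: measurable_restrict_subset\<close>)
  also have "\<dots> = (\<integral>\<^sup>+w. F w \<partial>bandit_space K \<nu>)" by (simp add: Finv bandit_space_Cm)
  finally show ?thesis .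
qed

lemma Ncr_meas:
  assumes "\<And>b. b < K \<Longrightarrow> sets (\<nu> b) = sets borel" "is_strategy K \<pi>" "{..<T} \<subseteq> I"
  shows "(\<lambda>w. real (Nc \<pi> a w T)) \<in> borel_measurable (PiM I (\<lambda>_. Cm K \<nu>))"
proof -
  have "(\<lambda>w. \<Sum>t<T. if arm \<pi> w t = a then 1 else (0::real)) \<in> borel_measurable (PiM I (\<lambda>_. Cm K \<nu>))"
  proof (rule borel_measurable_sum)
    fix t assume "t \<in> {..<T}"
    then have "{..t} \<subseteq> I" using assms(3) by auto
    then show "(\<lambda>w. if arm \<pi> w t = a then 1 else (0::real)) \<in> borel_measurable (PiM I (\<lambda>_. Cm K \<nu>))"
      using meas_arm_fun[OF assms(1,2) \<open>{..t} \<subseteq> I\<close>, where g="\<lambda>b. if b = a then 1 else (0::real)" and N=borel] by simp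
  qed
  then show ?thesis by (simp only: Nc_sum)
qed

lemma prob_bandit:
  assumes "\<And>b. b < K \<Longrightarrow> prob_space (\<nu> b)"
  shows "prob_space (bandit_space K \<nu>)"
  unfolding bandit_space_Cm by (rule prob_space_PiM) (rule prob_space_Cm[OF assms])

lemma regret_ge:
  assumes K: "0 < K" and P: "\<And>b. b < K \<Longrightarrow> prob_space (\<nu> b)" "\<And>b. b < K \<Longrightarrow> sets (\<nu> b) = sets borel"
    and strat: "is_strategy K \<pi>"
    and gi: "integrable (bandit_space K \<nu>) g"
    and gle: "\<And>w. g w \<le> real T * mu_star K \<nu> - (\<Sum>t<T. mean (\<nu> (arm \<pi> w t)))"
  shows "(\<integral>w. g w \<partial>bandit_space K \<nu>) \<le> regret K \<nu> \<pi> T"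
proof -
  interpret B: prob_space "bandit_space K \<nu>" by (rule prob_bandit[OF P(1)])
  define S where "S = (\<lambda>w. \<Sum>t<T. mean (\<nu> (arm \<pi> w t)))"
  define Bd where "Bd = (\<Sum>b<K. \<bar>mean (\<nu> b)\<bar>)"
  have Sm: "S \<in> borel_measurable (bandit_space K \<nu>)"
    unfolding S_def bandit_space_Cm
    by (intro borel_measurable_sum meas_arm_fun[OF P(2) strat]) auto
  have Sb: "norm (S w) \<le> real T * Bd" for w
  proof -
    have "norm (S w) \<le> (\<Sum>t<T. \<bar>mean (\<nu> (arm \<pi> w t))\<bar>)" unfolding S_def
      by (rule order.trans[OF norm_sum]) simp
    also have "\<dots> \<le> (\<Sum>t<T. Bd)"
    proof (rule sum_mono)
      fix t
      have "arm \<pi> w t < K" by (rule arm_lt[OF strat])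
      then show "\<bar>mean (\<nu> (arm \<pi> w t))\<bar> \<le> Bd" unfolding Bd_def
        by (intro member_le_sum[where f="\<lambda>b. \<bar>mean (\<nu> b)\<bar>"]) auto
    qed
    finally show ?thesis by simp
  qed
  have Si: "integrable (bandit_space K \<nu>) S"
    by (rule B.integrable_const_bound[where B="real T * Bd"]) (use Sb Sm in auto)
  have "regret K \<nu> \<pi> T = (\<integral>w. real T * mu_star K \<nu> - S w \<partial>bandit_space K \<nu>)"
    unfolding regret_def S_def[symmetric]
    by (subst Bochner_Integration.integral_diff) (use Si B.prob_space in auto)
  moreover have "(\<integral>w. g w \<partial>bandit_space K \<nu>) \<le> (\<integral>w. real T * mu_star K \<nu> - S w \<partial>bandit_space K \<nu>)"
    by (rule integral_mono) (use gi Si gle in \<open>auto simp: S_def\<close>)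
  ultimately show ?thesis by simp
qed


lemma change_prob:
  assumes P: "\<And>b. b < K \<Longrightarrow> prob_space (\<nu> b)" "\<And>b. b < K \<Longrightarrow> sets (\<nu> b) = sets borel"
    and P': "\<And>b. b < K \<Longrightarrow> prob_space (\<nu>' b)" "\<And>b. b < K \<Longrightarrow> sets (\<nu>' b) = sets borel"
    and same: "\<And>b. b < K \<Longrightarrow> b \<noteq> a \<Longrightarrow> \<nu>' b = \<nu> b"
    and dom: "\<And>\<phi>. \<phi> \<in> borel_measurable borel \<Longrightarrow> ennreal q * (\<integral>\<^sup>+y. \<phi> y \<partial>\<nu> a) \<le> (\<integral>\<^sup>+y. \<phi> y \<partial>\<nu>' a)"
    and strat: "is_strategy K \<pi>"
    and q: "0 \<le> q" "q \<le> 1"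
  shows "q ^ n * (\<integral>w. (if Nc \<pi> a w T \<le> n then 1 else 0) \<partial>bandit_space K \<nu>)
      \<le> (\<integral>w. (if Nc \<pi> a w T \<le> n then 1 else 0) \<partial>bandit_space K \<nu>')"
proof -
  define f where "f = (\<lambda>w. if Nc \<pi> a w T \<le> n then 1 else (0::real))"
  have f_alt: "f = (\<lambda>w. if real (Nc \<pi> a w T) \<le> real n then 1 else (0::real))"
    by (simp add: f_def)
  have fm: "f \<in> borel_measurable (PiM I (\<lambda>_. Cm K \<nu>))" if I: "{..<T} \<subseteq> I" for I
    unfolding f_alt using Ncr_meas[OF P(2) strat I, where a=a] by measurable
  have fm': "f \<in> borel_measurable (PiM I (\<lambda>_. Cm K \<nu>'))" if I: "{..<T} \<subseteq> I" for I
    unfolding f_alt using Ncr_meas[OF P'(2) strat I, where a=a] by measurable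
  define F where "F = (\<lambda>w. ennreal (f w))"
  have Fm: "F \<in> borel_measurable (PiM {..<T} (\<lambda>_. Cm K \<nu>))" unfolding F_def using fm[of "{..<T}"] by measurable
  have Fm': "F \<in> borel_measurable (PiM {..<T} (\<lambda>_. Cm K \<nu>'))" unfolding F_def using fm'[of "{..<T}"] by measurable
  have Finv: "F w1 = F w2" if "agr \<pi> T w1 w2" for w1 w2
    unfolding F_def f_def using Nc_agr[OF that, of a] by simp
  have Fres: "F (restrict w {..<T}) = F w" for w
  proof -
    have "agr \<pi> T (restrict w {..<T}) w" by (rule agr_eq) simp
    then show ?thesis by (rule Finv)
  qed
  have ch: "(\<integral>\<^sup>+w. W \<pi> a q w T * F w \<partial>PiM {..<T} (\<lambda>_. Cm K \<nu>)) \<le> (\<integral>\<^sup>+w. F w \<partial>PiM {..<T} (\<lambda>_. Cm K \<nu>'))"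
    by (rule change[OF P P' same dom strat Fm Finv])
  have pw: "ennreal (q ^ n) * F w \<le> W \<pi> a q w T * F w" for w
  proof (cases "Nc \<pi> a w T \<le> n")
    case True
    have "q ^ n \<le> q ^ Nc \<pi> a w T" by (rule power_decreasing[OF True q])
    then have "ennreal (q ^ n) \<le> W \<pi> a q w T" using q by (simp add: W_Nc ennreal_power ennreal_leI)
    then show ?thesis by (rule mult_right_mono) simp
  next
    case False then show ?thesis by (simp add: F_def f_def)
  qed
  have "ennreal (q ^ n) * (\<integral>\<^sup>+w. F w \<partial>PiM {..<T} (\<lambda>_. Cm K \<nu>)) = (\<integral>\<^sup>+w. ennreal (q ^ n) * F w \<partial>PiM {..<T} (\<lambda>_. Cm K \<nu>))"
    by (rule nn_integral_cmult[symmetric, OF Fm])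
  also have "\<dots> \<le> (\<integral>\<^sup>+w. W \<pi> a q w T * F w \<partial>PiM {..<T} (\<lambda>_. Cm K \<nu>))"
    by (rule nn_integral_mono) (rule pw)
  also note ch
  finally have le1: "ennreal (q ^ n) * (\<integral>\<^sup>+w. F w \<partial>PiM {..<T} (\<lambda>_. Cm K \<nu>)) \<le> (\<integral>\<^sup>+w. F w \<partial>PiM {..<T} (\<lambda>_. Cm K \<nu>'))" .
  have t1: "(\<integral>\<^sup>+w. F w \<partial>PiM {..<T} (\<lambda>_. Cm K \<nu>)) = (\<integral>\<^sup>+w. F w \<partial>bandit_space K \<nu>)"
    by (rule transport[OF P(1) Fm Fres])
  have t2: "(\<integral>\<^sup>+w. F w \<partial>PiM {..<T} (\<lambda>_. Cm K \<nu>')) = (\<integral>\<^sup>+w. F w \<partial>bandit_space K \<nu>')"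
    by (rule transport[OF P'(1) Fm' Fres])
  interpret B: prob_space "bandit_space K \<nu>" by (rule prob_bandit[OF P(1)])
  interpret B': prob_space "bandit_space K \<nu>'" by (rule prob_bandit[OF P'(1)])
  have fB: "f \<in> borel_measurable (bandit_space K \<nu>)" unfolding bandit_space_Cm by (rule fm) simp
  have fB': "f \<in> borel_measurable (bandit_space K \<nu>')" unfolding bandit_space_Cm by (rule fm') simp
  have fi: "integrable (bandit_space K \<nu>) f"
    by (rule B.integrable_const_bound[where B=1]) (use fB in \<open>auto simp: f_def\<close>)
  have fi': "integrable (bandit_space K \<nu>') f"
    by (rule B'.integrable_const_bound[where B=1]) (use fB' in \<open>auto simp: f_def\<close>)
  have e1: "(\<integral>\<^sup>+w. F w \<partial>bandit_space K \<nu>) = ennreal (\<integral>w. f w \<partial>bandit_space K \<nu>)"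
    unfolding F_def by (rule nn_integral_eq_integral[OF fi]) (simp add: f_def)
  have e2: "(\<integral>\<^sup>+w. F w \<partial>bandit_space K \<nu>') = ennreal (\<integral>w. f w \<partial>bandit_space K \<nu>')"
    unfolding F_def by (rule nn_integral_eq_integral[OF fi']) (simp add: f_def)
  have i0: "0 \<le> (\<integral>w. f w \<partial>bandit_space K \<nu>)" by (rule integral_nonneg_AE) (simp add: f_def)
  have i0': "0 \<le> (\<integral>w. f w \<partial>bandit_space K \<nu>')" by (rule integral_nonneg_AE) (simp add: f_def)
  have "ennreal (q ^ n * (\<integral>w. f w \<partial>bandit_space K \<nu>)) \<le> ennreal (\<integral>w. f w \<partial>bandit_space K \<nu>')"
    using le1 unfolding t1 t2 e1 e2 using q i0 by (simp add: ennreal_mult)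
  then show ?thesis unfolding f_def[symmetric] using i0' by (simp add: ennreal_le_iff)
qed


lemma mu_star_ge:
  assumes "b < K" shows "mean (\<nu> b) \<le> mu_star K \<nu>"
  unfolding mu_star_def using assms by (intro Max_ge) auto

lemma lower_bound:
  assumes K: "K \<ge> 2" and strat: "is_strategy K \<pi>" and ufc: "uniformly_fast_convergent D K \<pi>"
    and bnd: "bandit_in D K \<nu>" and DD: "D \<subseteq> D_all"
    and aK: "a < K" and gap: "mu_star K \<nu> - mean (\<nu> a) > 0"
    and na: "\<nu> a \<in> D_mM m M" "m \<le> M" and DM: "\<And>M'. M \<le> M' \<Longrightarrow> D_mM m M' \<subseteq> D"
  shows "liminf (\<lambda>T. ereal (regret K \<nu> \<pi> T / ln (real T))) = \<infinity>"
proof (rule ccontr)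
  assume "liminf (\<lambda>T. ereal (regret K \<nu> \<pi> T / ln (real T))) \<noteq> \<infinity>"
  then have "\<not> ((\<lambda>T. ereal (regret K \<nu> \<pi> T / ln (real T))) \<longlonglongrightarrow> \<infinity>)"
    using liminf_PInfty by blast
  then obtain r where fr: "frequently (\<lambda>T. \<not> (ereal r < ereal (regret K \<nu> \<pi> T / ln (real T)))) sequentially"
    unfolding tendsto_PInfty not_all not_eventually by blast
  define \<mu> where "\<mu> = mu_star K \<nu>"
  define \<Delta> where "\<Delta> = \<mu> - mean (\<nu> a)"
  have \<Delta>: "\<Delta> > 0" using gap by (simp add: \<Delta>_def \<mu>_def)
  have PD: "\<nu> b \<in> D_all" if "b < K" for b using bnd DD that by (auto simp: bandit_in_def)
  have P: "prob_space (\<nu> b)" "sets (\<nu> b) = sets borel" if "b < K" for b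
    using D_all_facts[OF PD[OF that]] by auto
  define C where "C = max r 1"
  define c where "c = C / \<Delta>"
  have c: "c > 0" using \<Delta> by (simp add: c_def C_def)
  define q where "q = exp (- 1 / (8 * c))"
  have q: "0 < q" "q < 1" using c by (auto simp: q_def)
  define \<epsilon> where "\<epsilon> = 1 - q"
  have e: "0 < \<epsilon>" "\<epsilon> < 1" using q by (auto simp: \<epsilon>_def)
  define x where "x = max (M + 1) (m + (\<mu> - m + 1) / \<epsilon>)"
  have xM: "M \<le> x" by (simp add: x_def)
  define \<nu>a where "\<nu>a = mix (\<nu> a) \<epsilon> x"
  define \<nu>' where "\<nu>' = \<nu>(a := \<nu>a)"
  have \<nu>aD: "\<nu>a \<in> D_mM m x" unfolding \<nu>a_def by (rule mix_D[OF na]) (use e xM in auto)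
  have \<nu>aDD: "\<nu>a \<in> D" using \<nu>aD DM[OF xM] by auto
  have "mean \<nu>a \<ge> m + \<epsilon> * (x - m)" unfolding \<nu>a_def by (rule mean_mix[OF na]) (use e xM in auto)
  moreover have "\<epsilon> * (x - m) \<ge> \<epsilon> * ((\<mu> - m + 1) / \<epsilon>)"
    using e by (intro mult_left_mono) (auto simp: x_def)
  ultimately have mean_a: "mean \<nu>a \<ge> \<mu> + 1" using e by simp
  have bnd': "bandit_in D K \<nu>'" using bnd \<nu>aDD by (auto simp: bandit_in_def \<nu>'_def)
  have P': "prob_space (\<nu>' b)" "sets (\<nu>' b) = sets borel" if "b < K" for b
    using D_mM_facts[OF \<nu>aD] P[OF that] by (auto simp: \<nu>'_def)
  have same: "\<nu>' b = \<nu> b" if "b \<noteq> a" for b using that by (simp add: \<nu>'_def)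
  have dom: "ennreal q * (\<integral>\<^sup>+y. \<phi> y \<partial>\<nu> a) \<le> (\<integral>\<^sup>+y. \<phi> y \<partial>\<nu>' a)" if \<phi>: "\<phi> \<in> borel_measurable borel" for \<phi>
  proof -
    have "(\<integral>\<^sup>+y. \<phi> y \<partial>\<nu>' a) = ennreal \<epsilon> * \<phi> x + ennreal (1 - \<epsilon>) * (\<integral>\<^sup>+y. \<phi> y \<partial>\<nu> a)"
      unfolding \<nu>'_def \<nu>a_def using P[OF aK] e \<phi> by (simp add: nn_integral_mix)
    then show ?thesis by (simp add: \<epsilon>_def)
  qed
  have mu': "mu_star K \<nu>' = mean \<nu>a"
    unfolding mu_star_def
  proof (rule Max_eqI)
    show "finite ((\<lambda>a. mean (\<nu>' a)) ` {..<K})" by simp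
    show "mean \<nu>a \<in> (\<lambda>a. mean (\<nu>' a)) ` {..<K}" using aK by (auto simp: \<nu>'_def)
    fix y assume "y \<in> (\<lambda>a. mean (\<nu>' a)) ` {..<K}"
    then obtain b where b: "b < K" "y = mean (\<nu>' b)" by auto
    show "y \<le> mean \<nu>a"
    proof (cases "b = a")
      case True then show ?thesis using b by (simp add: \<nu>'_def)
    next
      case False
      then have "y = mean (\<nu> b)" using b by (simp add: \<nu>'_def)
      also have "\<dots> \<le> \<mu>" unfolding \<mu>_def by (rule mu_star_ge[OF b(1)])
      finally show ?thesis using mean_a by simp
    qed
  qed
  have "(\<lambda>T. regret K \<nu>' \<pi> T / real T powr (1/2)) \<longlonglongrightarrow> 0"
    using ufc bnd' unfolding uniformly_fast_convergent_def by auto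
  then have ev1: "eventually (\<lambda>T. \<bar>regret K \<nu>' \<pi> T / real T powr (1/2)\<bar> < 1) sequentially"
    by (rule order_tendstoD(2)[OF tendsto_rabs, of _ 0, simplified]) simp
  have ev2: "eventually (\<lambda>T. real T powr (1/2) < (real T - 2 * c * ln (real T)) * real T powr (-1/4) / 2) sequentially"
    by real_asymp
  have ev3: "eventually (\<lambda>T. (2::nat) \<le> T) sequentially" by (rule eventually_ge_at_top)
  from frequently_eventually_frequently[OF fr eventually_conj[OF ev1 eventually_conj[OF ev2 ev3]]]
  obtain T where T0: "\<not> (ereal r < ereal (regret K \<nu> \<pi> T / ln (real T)))"
    and T1: "\<bar>regret K \<nu>' \<pi> T / real T powr (1/2)\<bar> < 1"
    and T2: "real T powr (1/2) < (real T - 2 * c * ln (real T)) * real T powr (-1/4) / 2"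
    and T3: "2 \<le> T"
    by (auto dest: frequently_ex)

  define L where "L = ln (real T)"
  have L: "L > 0" using T3 by (simp add: L_def)
  have K0: "0 < K" using K by simp
  define B where "B = bandit_space K \<nu>"
  define B' where "B' = bandit_space K \<nu>'"
  interpret PB: prob_space B unfolding B_def by (rule prob_bandit) (rule P)
  interpret PB': prob_space B' unfolding B'_def by (rule prob_bandit) (rule P')
  have NcB: "(\<lambda>w. real (Nc \<pi> a w T)) \<in> borel_measurable B"
    unfolding B_def bandit_space_Cm by (rule Ncr_meas[OF P(2) strat]) auto
  have NcB': "(\<lambda>w. real (Nc \<pi> a w T)) \<in> borel_measurable B'"
    unfolding B'_def bandit_space_Cm by (rule Ncr_meas[OF P'(2) strat]) auto
  have Nci: "integrable B (\<lambda>w. real (Nc \<pi> a w T))"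
    by (rule PB.integrable_const_bound[where B="real T"]) (use NcB Nc_le in auto)
  have RT: "regret K \<nu> \<pi> T \<le> C * L"
  proof -
    have "regret K \<nu> \<pi> T / L \<le> r" using T0 by (simp add: L_def)
    then have "regret K \<nu> \<pi> T \<le> r * L" using L by (simp add: pos_divide_le_eq)
    also have "\<dots> \<le> C * L" using L by (intro mult_right_mono) (auto simp: C_def)
    finally show ?thesis .
  qed
  have sum_gap: "real T * mu_star K \<nu> - (\<Sum>t<T. mean (\<nu> (arm \<pi> w t))) = (\<Sum>t<T. \<mu> - mean (\<nu> (arm \<pi> w t)))" for w
    by (simp add: sum_subtractf \<mu>_def)
  have E: "\<Delta> * (\<integral>w. real (Nc \<pi> a w T) \<partial>B) \<le> regret K \<nu> \<pi> T"
  proof -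
    have "(\<integral>w. \<Delta> * real (Nc \<pi> a w T) \<partial>bandit_space K \<nu>) \<le> regret K \<nu> \<pi> T"
    proof (rule regret_ge[OF K0 P strat])
      show "integrable (bandit_space K \<nu>) (\<lambda>w. \<Delta> * real (Nc \<pi> a w T))" using Nci by (simp add: B_def)
      fix w
      have "\<Delta> * real (Nc \<pi> a w T) = (\<Sum>t<T. if arm \<pi> w t = a then \<Delta> else 0)"
        by (simp add: Nc_sum sum_distrib_left if_distrib cong: if_cong)
      also have "\<dots> \<le> (\<Sum>t<T. \<mu> - mean (\<nu> (arm \<pi> w t)))"
      proof (rule sum_mono)
        fix t
        have "mean (\<nu> (arm \<pi> w t)) \<le> \<mu>" unfolding \<mu>_def by (rule mu_star_ge[OF arm_lt[OF strat]])
        then show "(if arm \<pi> w t = a then \<Delta> else 0) \<le> \<mu> - mean (\<nu> (arm \<pi> w t))"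
          by (auto simp: \<Delta>_def)
      qed
      finally show "\<Delta> * real (Nc \<pi> a w T) \<le> real T * mu_star K \<nu> - (\<Sum>t<T. mean (\<nu> (arm \<pi> w t)))"
        by (simp only: sum_gap)
    qed
    then show ?thesis by (simp add: B_def)
  qed
  have EcL: "(\<integral>w. real (Nc \<pi> a w T) \<partial>B) \<le> c * L"
  proof -
    have "\<Delta> * (\<integral>w. real (Nc \<pi> a w T) \<partial>B) \<le> \<Delta> * (c * L)"
      using E RT \<Delta> by (simp add: c_def)
    then show ?thesis using \<Delta> by simp
  qed
  define n where "n = nat \<lfloor>2 * c * L\<rfloor>"
  have cL: "2 * c * L > 0" using c L by simp
  have n_le: "real n \<le> 2 * c * L" using cL by (simp add: n_def)
  have n_gt: "real n + 1 > 2 * c * L" using cL by (simp add: n_def)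
  define f where "f = (\<lambda>w. if Nc \<pi> a w T \<le> n then 1 else (0::real))"
  have f_alt: "f = (\<lambda>w. if real (Nc \<pi> a w T) \<le> real n then 1 else (0::real))"
    by (simp add: f_def)
  have fB: "f \<in> borel_measurable B" unfolding f_alt using NcB by measurable
  have fB': "f \<in> borel_measurable B'" unfolding f_alt using NcB' by measurable
  have fi: "integrable B f"
    by (rule PB.integrable_const_bound[where B=1]) (use fB in \<open>auto simp: f_def\<close>)
  have fi': "integrable B' f"
    by (rule PB'.integrable_const_bound[where B=1]) (use fB' in \<open>auto simp: f_def\<close>)
  have markov: "(\<integral>w. f w \<partial>B) \<ge> 1 / 2"
  proof -
    have pw: "1 - f w \<le> real (Nc \<pi> a w T) / (2 * c * L)" for w
    proof (cases "Nc \<pi> a w T \<le> n")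
      case True then show ?thesis using cL by (simp add: f_def)
    next
      case False
      then have "real (Nc \<pi> a w T) \<ge> real n + 1" by simp
      then have "real (Nc \<pi> a w T) > 2 * c * L" using n_gt by linarith
      then have "real (Nc \<pi> a w T) / (2 * c * L) > 1" using cL by simp
      then show ?thesis using False by (simp add: f_def)
    qed
    have "(\<integral>w. 1 - f w \<partial>B) \<le> (\<integral>w. real (Nc \<pi> a w T) / (2 * c * L) \<partial>B)"
      by (rule integral_mono) (use fi Nci pw in auto)
    also have "\<dots> = (\<integral>w. real (Nc \<pi> a w T) \<partial>B) / (2 * c * L)" by simp
    also have "\<dots> \<le> (c * L) / (2 * c * L)" using EcL cL by (intro divide_right_mono) auto
    also have "\<dots> = 1 / 2" using c L by simp
    also have "(\<integral>w. 1 - f w \<partial>B) = 1 - (\<integral>w. f w \<partial>B)"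
      using fi PB.prob_space by (subst Bochner_Integration.integral_diff) auto
    finally show ?thesis by simp
  qed
  have chg: "q ^ n * (\<integral>w. f w \<partial>B) \<le> (\<integral>w. f w \<partial>B')"
    unfolding B_def B'_def f_def
    by (rule change_prob[where K=K and \<nu>=\<nu> and \<nu>'=\<nu>' and a=a and q=q and \<pi>=\<pi>])
      (use q P P' dom strat same in auto)
  have qn: "q ^ n \<ge> real T powr (-1/4)"
  proof -
    have "q ^ n = exp (real n * (- 1 / (8 * c)))" unfolding q_def by (rule exp_of_nat_mult[symmetric])
    also have "exp (real n * (- 1 / (8 * c))) \<ge> exp (- 1 / 4 * L)"
    proof -
      have "real n * (1 / (8 * c)) \<le> 2 * c * L * (1 / (8 * c))" using n_le c by (intro mult_right_mono) auto
      also have "\<dots> = 1 / 4 * L" using c by simp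
      finally show ?thesis by simp
    qed
    also have "exp (- 1 / 4 * L) = real T powr (-1/4)" using T3 by (simp add: powr_def L_def)
    finally show ?thesis .
  qed
  have Tpos: "real T - 2 * c * L > 0"
  proof -
    have "0 < real T powr (1/2)" using T3 by simp
    also note T2
    finally have "0 < (real T - 2 * c * L) * real T powr (- 1 / 4)" by (simp add: L_def)
    moreover have "0 < real T powr (-1/4)" using T3 by simp
    ultimately show ?thesis by (simp add: zero_less_mult_iff)
  qed
  have R': "(real T - real n) * (\<integral>w. f w \<partial>B') \<le> regret K \<nu>' \<pi> T"
  proof -
    have "(\<integral>w. (real T - real n) * f w \<partial>bandit_space K \<nu>') \<le> regret K \<nu>' \<pi> T"
    proof (rule regret_ge[OF K0 P' strat])
      show "integrable (bandit_space K \<nu>') (\<lambda>w. (real T - real n) * f w)" using fi' by (simp add: B'_def)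
      fix w
      have "(real T - real n) * f w \<le> real T - real (Nc \<pi> a w T)"
        using Nc_le[of \<pi> a w T] by (auto simp: f_def)
      also have "real T - real (Nc \<pi> a w T) = (\<Sum>t<T. if arm \<pi> w t = a then 0 else 1)"
      proof -
        have "(\<Sum>t<T. if arm \<pi> w t = a then 0 else (1::real)) = (\<Sum>t<T. 1 - (if arm \<pi> w t = a then 1 else 0))"
          by (rule sum.cong) auto
        also have "\<dots> = real T - (\<Sum>t<T. if arm \<pi> w t = a then 1 else 0)" by (simp add: sum_subtractf)
        finally show ?thesis by (simp add: Nc_sum)
      qed
      also have "\<dots> \<le> (\<Sum>t<T. mean \<nu>a - mean (\<nu>' (arm \<pi> w t)))"
      proof (rule sum_mono)
        fix t
        have ak: "arm \<pi> w t < K" by (rule arm_lt[OF strat])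
        show "(if arm \<pi> w t = a then 0 else 1) \<le> mean \<nu>a - mean (\<nu>' (arm \<pi> w t))"
        proof (cases "arm \<pi> w t = a")
          case True then show ?thesis by (simp add: \<nu>'_def)
        next
          case False
          have "mean (\<nu> (arm \<pi> w t)) \<le> \<mu>" unfolding \<mu>_def by (rule mu_star_ge[OF ak])
          then show ?thesis using False mean_a by (simp add: \<nu>'_def)
        qed
      qed
      also have "\<dots> = real T * mu_star K \<nu>' - (\<Sum>t<T. mean (\<nu>' (arm \<pi> w t)))"
        by (simp add: sum_subtractf mu')
      finally show "(real T - real n) * f w \<le> real T * mu_star K \<nu>' - (\<Sum>t<T. mean (\<nu>' (arm \<pi> w t)))" .
    qed
    then show ?thesis by (simp add: B'_def)
  qed
  have i0: "0 \<le> (\<integral>w. f w \<partial>B')" by (rule integral_nonneg_AE) (simp add: f_def)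
  have "real T powr (1/2) < (real T - 2 * c * L) * (real T powr (-1/4) / 2)" using T2 by (simp add: L_def)
  also have "\<dots> \<le> (real T - real n) * (q ^ n * (1 / 2))"
    using Tpos n_le qn by (intro mult_mono) auto
  also have "\<dots> \<le> (real T - real n) * (\<integral>w. f w \<partial>B')"
  proof (rule mult_left_mono)
    have "q ^ n * (1 / 2) \<le> q ^ n * (\<integral>w. f w \<partial>B)" using markov q by (intro mult_left_mono) auto
    then show "q ^ n * (1 / 2) \<le> (\<integral>w. f w \<partial>B')" using chg by linarith
    show "0 \<le> real T - real n" using Tpos n_le by linarith
  qed
  also have "\<dots> \<le> regret K \<nu>' \<pi> T" by (rule R')
  finally have "real T powr (1/2) < regret K \<nu>' \<pi> T" .
  moreover have "regret K \<nu>' \<pi> T < real T powr (1/2)"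
  proof -
    have "regret K \<nu>' \<pi> T / real T powr (1/2) < 1" using T1 by linarith
    then show ?thesis using T3 by (simp add: divide_less_eq)
  qed
  ultimately show False by linarith
qed


lemma D_all_sub: "m < M \<Longrightarrow> M \<le> M' \<Longrightarrow> D_mM m M' \<subseteq> D_all"
proof
  fix x assume "m < M" "M \<le> M'" "x \<in> D_mM m M'"
  then have "m < M' \<and> x \<in> D_mM m M'" by simp
  then show "x \<in> D_all" unfolding D_all_def by blast
qed

lemma D_mplus_sub: "m < M \<Longrightarrow> M \<le> M' \<Longrightarrow> D_mM m M' \<subseteq> D_mplus m"
proof
  fix x assume "m < M" "M \<le> M'" "x \<in> D_mM m M'"
  then have "m < M' \<and> x \<in> D_mM m M'" by simp
  then show "x \<in> D_mplus m" unfolding D_mplus_def by blast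
qed

lemma D_mplus_all: "D_mplus m \<subseteq> D_all"
  unfolding D_mplus_def D_all_def by auto

theorem theorem4:
  fixes K :: nat
  assumes "K \<ge> 2"
  shows
    "(\<forall>\<nu>. bandit_in D_all K \<nu> \<longrightarrow>
        (\<forall>a<K. mu_star K \<nu> - mean (\<nu> a) > 0 \<longrightarrow> Kinf (\<nu> a) (mu_star K \<nu>) D_all = 0))
   \<and> (\<forall>\<pi>. is_strategy K \<pi> \<and> uniformly_fast_convergent D_all K \<pi> \<longrightarrow>
        (\<forall>\<nu>. bandit_in D_all K \<nu> \<and> (\<exists>a<K. mu_star K \<nu> - mean (\<nu> a) > 0) \<longrightarrow>
           liminf (\<lambda>T. ereal (regret K \<nu> \<pi> T / ln (real T))) = \<infinity>))
   \<and> (\<forall>m::real.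
        (\<forall>\<nu>. bandit_in (D_mplus m) K \<nu> \<longrightarrow>
          (\<forall>a<K. mu_star K \<nu> - mean (\<nu> a) > 0 \<longrightarrow> Kinf (\<nu> a) (mu_star K \<nu>) (D_mplus m) = 0))
      \<and> (\<forall>\<pi>. is_strategy K \<pi> \<and> uniformly_fast_convergent (D_mplus m) K \<pi> \<longrightarrow>
          (\<forall>\<nu>. bandit_in (D_mplus m) K \<nu> \<and> (\<exists>a<K. mu_star K \<nu> - mean (\<nu> a) > 0) \<longrightarrow>
             liminf (\<lambda>T. ereal (regret K \<nu> \<pi> T / ln (real T))) = \<infinity>)))"
proof (intro conjI allI impI)
  fix \<nu> a assume b: "bandit_in D_all K \<nu>" and a: "a < K"
  then have "\<nu> a \<in> D_all" by (simp add: bandit_in_def)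
  then obtain m M where mM: "m < M" "\<nu> a \<in> D_mM m M" by (auto simp: D_all_def)
  show "Kinf (\<nu> a) (mu_star K \<nu>) D_all = 0"
    by (rule Kinf_zero[OF mM(2) _ D_all_sub[OF mM(1)]]) (use mM in auto)
next
  fix \<pi> \<nu> assume s: "is_strategy K \<pi> \<and> uniformly_fast_convergent D_all K \<pi>"
    and b: "bandit_in D_all K \<nu> \<and> (\<exists>a<K. mu_star K \<nu> - mean (\<nu> a) > 0)"
  then obtain a where a: "a < K" "mu_star K \<nu> - mean (\<nu> a) > 0" by blast
  then have "\<nu> a \<in> D_all" using b by (simp add: bandit_in_def)
  then obtain m M where mM: "m < M" "\<nu> a \<in> D_mM m M" by (auto simp: D_all_def)
  show "liminf (\<lambda>T. ereal (regret K \<nu> \<pi> T / ln (real T))) = \<infinity>"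
    by (rule lower_bound[OF assms _ _ _ _ a mM(2) _ D_all_sub[OF mM(1)]]) (use s b mM in auto)
next
  fix m :: real and \<nu> a assume b: "bandit_in (D_mplus m) K \<nu>" and a: "a < K"
  then have "\<nu> a \<in> D_mplus m" by (simp add: bandit_in_def)
  then obtain M where mM: "m < M" "\<nu> a \<in> D_mM m M" by (auto simp: D_mplus_def)
  show "Kinf (\<nu> a) (mu_star K \<nu>) (D_mplus m) = 0"
    by (rule Kinf_zero[OF mM(2) _ D_mplus_sub[OF mM(1)] D_mplus_all]) (use mM in auto)
next
  fix m :: real and \<pi> \<nu> assume s: "is_strategy K \<pi> \<and> uniformly_fast_convergent (D_mplus m) K \<pi>"
    and b: "bandit_in (D_mplus m) K \<nu> \<and> (\<exists>a<K. mu_star K \<nu> - mean (\<nu> a) > 0)"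
  then obtain a where a: "a < K" "mu_star K \<nu> - mean (\<nu> a) > 0" by blast
  then have "\<nu> a \<in> D_mplus m" using b by (simp add: bandit_in_def)
  then obtain M where mM: "m < M" "\<nu> a \<in> D_mM m M" by (auto simp: D_mplus_def)
  show "liminf (\<lambda>T. ereal (regret K \<nu> \<pi> T / ln (real T))) = \<infinity>"
    by (rule lower_bound[OF assms _ _ _ D_mplus_all a mM(2) _ D_mplus_sub[OF mM(1)]]) (use s b mM in auto)
qed

end
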